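(* Let $p\ge1$, let $A_1,\dots,A_p\ge1$ and $n_1,\dots,n_p\ge0$ be integers, and let $P(X_1,\dots,X_p)\in\mathbb{Q}[X_1,\dots,X_p]$. Let $z_1,\dots,z_p$ be complex numbers with $|z_1|>1$ and $|z_j|\ge1$ for $j=2,\dots,p$. Then the series $$S=\sum_{k_1\ge\cdots\ge k_p\ge1}\frac{P(k_1,\dots,k_p)}{(k_1)_{n_1+1}^{A_1}\cdots(k_p)_{n_p+1}^{A_p}}\,z_1^{-k_1}\cdots z_p^{-k_p}$$ can be written as a finite linear combination, with coefficients Laurent polynomials in $\mathbb{Q}[z_1^{\pm1},\dots,z_p^{\pm1}]$, of multiple polylogarithms $\mathrm{La}_{s_1,\dots,s_q}(1/\widehat z_1,\dots,1/\widehat z_q)$, where $0\le q\le p$, $s_1,\dots,s_q\in\mathbb{Z}$ satisfy $\sum_{j=1}^q\max(s_j,0)\le\sum_{j=1}^pA_j$, and each $\widehat z_i$ is a product of some of the $z_1,\dots,z_p$.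
   Context: $(\alpha)_m=\alpha(\alpha+1)\cdots(\alpha+m-1)$ is the Pochhammer symbol. For $q\ge1$, integers $s_1,\dots,s_q\in\mathbb{Z}$ and complex $w_1,\dots,w_q$ (with $|w_1|<1$, $|w_i|\le1$), the large multiple polylogarithm is $\mathrm{La}_{s_1,\dots,s_q}(w_1,\dots,w_q)=\sum_{k_1\ge k_2\ge\cdots\ge k_q\ge1}\frac{w_1^{k_1}\cdots w_q^{k_q}}{k_1^{s_1}\cdots k_q^{s_q}}$; its weight is $\sum_j\max(s_j,0)$. The polylogarithm of depth $q=0$ is the constant function $1$. *)

theory Defs
  imports "HOL-Analysis.Analysis"
begin

text \<open>Index tuples k_1 \<ge> k_2 \<ge> ... \<ge> k_q \<ge> 1, as lists of length q
  (list position i corresponds to the index i+1 of the paper).\<close>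
definition chains :: "nat \<Rightarrow> nat list set" where
  "chains q = {ks. length ks = q \<and> sorted_wrt (\<lambda>a b. a \<ge> b) ks \<and> (\<forall>k\<in>set ks. 1 \<le> k)}"

text \<open>Large multiple polylogarithm La_{s_1..s_q}(w_1..w_q); depth 0 gives 1.\<close>
definition La :: "int list \<Rightarrow> complex list \<Rightarrow> complex" where
  "La ss ws = infsum (\<lambda>ks. \<Prod>i<length ss. (ws ! i) ^ (ks ! i) / (of_nat (ks ! i)) powi (ss ! i))
                     (chains (length ss))"

text \<open>A polynomial in Q[X_1..X_p], given by a list of monomials (exponent vector, coefficient),
  evaluated at an integer point k (a list of length p).\<close>
definition poly_eval :: "((nat \<Rightarrow> nat) \<times> rat) list \<Rightarrow> nat list \<Rightarrow> complex" where
  "poly_eval P k = (\<Sum>(e, c)\<leftarrow>P. of_rat c * (\<Prod>j<length k. (of_nat (k ! j)) ^ (e j)))"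

text \<open>A Laurent polynomial in Q[z_1^{\<plusminus>1}..z_p^{\<plusminus>1}], given by a list of monomials,
  evaluated at z (variables z 0, ..., z (p-1)).\<close>
definition laurent_eval :: "((nat \<Rightarrow> int) \<times> rat) list \<Rightarrow> nat \<Rightarrow> (nat \<Rightarrow> complex) \<Rightarrow> complex" where
  "laurent_eval L p z = (\<Sum>(e, c)\<leftarrow>L. of_rat c * (\<Prod>j<p. (z j) powi (e j)))"

text \<open>The series S of the theorem (indices shifted: j ranges over 0..p-1).\<close>
definition Sser :: "nat \<Rightarrow> (nat \<Rightarrow> nat) \<Rightarrow> (nat \<Rightarrow> nat) \<Rightarrow> ((nat \<Rightarrow> nat) \<times> rat) list
                     \<Rightarrow> (nat \<Rightarrow> complex) \<Rightarrow> complex" where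
  "Sser p A n P z = infsum (\<lambda>ks. poly_eval P ks *
       (\<Prod>j<p. (z j) powi (- int (ks ! j)) / (pochhammer (of_nat (ks ! j)) (n j + 1)) ^ (A j)))
     (chains p)"

end

theory Submission
  imports Defs
begin


definition lo :: "nat \<Rightarrow> nat list \<Rightarrow> nat" where
  "lo a ks = (if a < length ks then ks ! a else 1)"

definition ins :: "nat \<Rightarrow> nat list \<Rightarrow> nat \<Rightarrow> nat list" where
  "ins a ks m = take a ks @ m # drop a ks"

lemma mem_chains: "ks \<in> chains n \<longleftrightarrow> length ks = n \<and> sorted_wrt (\<lambda>a b. a \<ge> b) ks \<and> (\<forall>k\<in>set ks. 1 \<le> k)"
  by (simp add: chains_def)

lemma chains_split:
  "as @ m # bs \<in> chains (Suc (length as + length bs)) \<longleftrightarrow>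
   as @ bs \<in> chains (length as + length bs) \<and> (case bs of [] \<Rightarrow> 1 | b # _ \<Rightarrow> b) \<le> m \<and> (as \<noteq> [] \<longrightarrow> m \<le> last as)"
proof (cases bs)
  case Nil
  then show ?thesis
    by (cases as rule: rev_exhaust) (auto simp: mem_chains sorted_wrt_append)
next
  case (Cons b bs')
  then show ?thesis
    by (cases as rule: rev_exhaust) (auto simp: mem_chains sorted_wrt_append intro: order.trans)
qed

lemma chains_ge1: "ks \<in> chains n \<Longrightarrow> k \<in> set ks \<Longrightarrow> 1 \<le> k"
  by (simp add: mem_chains)

lemma chains_nth_mono: "ks \<in> chains n \<Longrightarrow> i \<le> j \<Longrightarrow> j < n \<Longrightarrow> ks ! j \<le> ks ! i"
  unfolding mem_chains by (metis le_neq_implies_less order.refl sorted_wrt_nth_less)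

lemma chains_ins:
  assumes "a \<le> n"
  shows "ms \<in> chains (Suc n) \<longleftrightarrow> (\<exists>ks m. ms = ins a ks m \<and> ks \<in> chains n \<and> lo a ks \<le> m \<and> (0 < a \<longrightarrow> m \<le> ks ! (a - 1)))"
proof
  assume ms: "ms \<in> chains (Suc n)"
  hence len: "length ms = Suc n" by (simp add: mem_chains)
  define ks where "ks = take a ms @ drop (Suc a) ms"
  have e: "ms = take a ms @ ms ! a # drop (Suc a) ms"
    using len assms by (simp add: id_take_nth_drop)
  have L: "Suc (length (take a ms) + length (drop (Suc a) ms)) = Suc n" using len assms by simp
  have "take a ms @ ms ! a # drop (Suc a) ms \<in> chains (Suc (length (take a ms) + length (drop (Suc a) ms)))"
    using ms L e by simp
  hence c: "ks \<in> chains n" and l: "(case drop (Suc a) ms of [] \<Rightarrow> 1 | b # _ \<Rightarrow> b) \<le> ms ! a"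
    and u: "take a ms \<noteq> [] \<longrightarrow> ms ! a \<le> last (take a ms)"
    unfolding chains_split ks_def using L by auto
  have "ms = ins a ks (ms ! a)" unfolding ins_def ks_def using e len assms by simp
  moreover have "lo a ks \<le> ms ! a"
  proof (cases "a < n")
    case True
    then have "drop (Suc a) ms = ms ! Suc a # drop (Suc (Suc a)) ms" using len
      by (simp add: Cons_nth_drop_Suc)
    then show ?thesis using l True len assms unfolding lo_def ks_def by (auto simp: nth_append)
  next
    case False
    then have "drop (Suc a) ms = []" using len assms by simp
    then show ?thesis using l False len assms unfolding lo_def ks_def by (auto simp: nth_append)
  qed
  moreover have "0 < a \<longrightarrow> ms ! a \<le> ks ! (a - 1)"
    using u len assms unfolding ks_def by (auto simp: nth_append last_conv_nth)
  ultimately show "\<exists>ks m. ms = ins a ks m \<and> ks \<in> chains n \<and> lo a ks \<le> m \<and> (0 < a \<longrightarrow> m \<le> ks ! (a - 1))"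
    using c by blast
next
  assume "\<exists>ks m. ms = ins a ks m \<and> ks \<in> chains n \<and> lo a ks \<le> m \<and> (0 < a \<longrightarrow> m \<le> ks ! (a - 1))"
  then obtain ks m where ms: "ms = ins a ks m" and c: "ks \<in> chains n" and l: "lo a ks \<le> m"
    and u: "0 < a \<longrightarrow> m \<le> ks ! (a - 1)" by blast
  have len: "length ks = n" using c by (simp add: mem_chains)
  have L: "length (take a ks) + length (drop a ks) = n" using len assms by simp
  have l2: "(case drop a ks of [] \<Rightarrow> 1 | b # _ \<Rightarrow> b) \<le> m"
  proof (cases "a < n")
    case True
    then have "drop a ks = ks ! a # drop (Suc a) ks" using len by (simp add: Cons_nth_drop_Suc)
    then show ?thesis using l True len unfolding lo_def by auto
  next
    case False
    then show ?thesis using l len assms unfolding lo_def by auto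
  qed
  have u2: "take a ks \<noteq> [] \<longrightarrow> m \<le> last (take a ks)"
    using u len assms by (auto simp: last_conv_nth min_def)
  have "take a ks @ m # drop a ks \<in> chains (Suc (length (take a ks) + length (drop a ks)))"
    unfolding chains_split using c l2 u2 L by simp
  then show "ms \<in> chains (Suc n)" using ms L unfolding ins_def by simp
qed

lemma lo_le_up: "ks \<in> chains n \<Longrightarrow> 0 < a \<Longrightarrow> a \<le> n \<Longrightarrow> lo a ks \<le> ks ! (a - 1)"
  unfolding lo_def
  using chains_nth_mono[of ks n "a - 1" a] chains_ge1[of ks n "ks ! (a - 1)"]
  by (auto simp: mem_chains)

lemma lo_ge1: "ks \<in> chains n \<Longrightarrow> 1 \<le> lo a ks"
  unfolding lo_def using chains_ge1 by (auto simp: mem_chains)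

definition PP :: "(nat \<Rightarrow> complex) list \<Rightarrow> nat list \<Rightarrow> complex" where
  "PP fs ks = prod_list (map2 (\<lambda>f k. f k) fs ks)"

lemma PP_append: "length xs = length as \<Longrightarrow> PP (xs @ ys) (as @ bs) = PP xs as * PP ys bs"
  by (simp add: PP_def)

lemma PP_Cons: "PP (f # fs) (k # ks) = f k * PP fs ks"
  by (simp add: PP_def)

lemma PP_Nil: "PP [] ks = 1" "PP fs [] = 1"
  by (simp_all add: PP_def)

lemma PP_ins:
  assumes "length xs = a" "length ks = a + length ys"
  shows "PP (xs @ g # ys) (ins a ks m) = PP xs (take a ks) * g m * PP ys (drop a ks)"
  using assms unfolding ins_def by (simp add: PP_append PP_Cons)



lemma infsum_UN_disj:
  fixes f :: "'a \<Rightarrow> complex"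
  assumes "finite T" "\<And>t. t \<in> T \<Longrightarrow> f summable_on E t"
    "\<And>s t. s \<in> T \<Longrightarrow> t \<in> T \<Longrightarrow> s \<noteq> t \<Longrightarrow> E s \<inter> E t = {}"
  shows "f summable_on (\<Union>t\<in>T. E t) \<and> infsum f (\<Union>t\<in>T. E t) = (\<Sum>t\<in>T. infsum f (E t))"
  using assms
proof (induction T rule: finite_induct)
  case empty
  then show ?case by simp
next
  case (insert x F)
  have IH: "f summable_on (\<Union>t\<in>F. E t) \<and> infsum f (\<Union>t\<in>F. E t) = (\<Sum>t\<in>F. infsum f (E t))"
    using insert by blast
  have dj: "E x \<inter> (\<Union>t\<in>F. E t) = {}" using insert.prems(2) insert.hyps(2) by blast
  have sx: "f summable_on E x" using insert by blast
  have eq: "(\<Union>t\<in>insert x F. E t) = E x \<union> (\<Union>t\<in>F. E t)" by simp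
  show ?case unfolding eq
    using summable_on_Un_disjoint[OF sx IH[THEN conjunct1] dj]
      infsum_Un_disjoint[OF sx IH[THEN conjunct1] dj] IH insert.hyps by simp
qed

lemma mem_graph_img: "(x, m) \<in> (\<lambda>k. (k, f k)) ` A \<longleftrightarrow> x \<in> A \<and> m = f x"
  by auto

lemma inj_graph: "inj_on (\<lambda>k. (k, f k)) A"
  by (auto simp: inj_on_def)

lemma infsum_graph: "infsum \<Phi> ((\<lambda>k. (k, f k)) ` A) = infsum (\<lambda>k. \<Phi> (k, f k)) A"
  using infsum_reindex[OF inj_graph, of \<Phi> f A] by (simp add: comp_def)

lemma summable_graph: "\<Phi> summable_on ((\<lambda>k. (k, f k)) ` A) \<longleftrightarrow> (\<lambda>k. \<Phi> (k, f k)) summable_on A"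
  using summable_on_reindex[OF inj_graph, of \<Phi> f A] by (simp add: comp_def)

lemma shift_generic:
  fixes \<Phi> :: "nat list \<times> nat \<Rightarrow> complex" and d :: nat
  assumes an: "a \<le> n"
  defines "P0 \<equiv> {(ks, m). ks \<in> chains n \<and> lo a ks \<le> m \<and> (0 < a \<longrightarrow> m \<le> ks ! (a - 1))}"
  defines "PS \<equiv> {(ks, m). ks \<in> chains n \<and> lo a ks + d \<le> m \<and> (0 < a \<longrightarrow> m \<le> ks ! (a - 1) + d)}"
  assumes s0: "\<Phi> summable_on P0" and sS: "\<Phi> summable_on PS"
    and sB: "\<And>t. t < d \<Longrightarrow> (\<lambda>ks. \<Phi> (ks, lo a ks + t)) summable_on chains n"
    and sC: "\<And>t. 0 < a \<Longrightarrow> t \<in> {1..d} \<Longrightarrow> (\<lambda>ks. \<Phi> (ks, ks ! (a - 1) + t)) summable_on chains n"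
  shows "infsum \<Phi> PS = infsum \<Phi> P0 - (\<Sum>t<d. infsum (\<lambda>ks. \<Phi> (ks, lo a ks + t)) (chains n))
          + (if a = 0 then 0 else (\<Sum>t\<in>{1..d}. infsum (\<lambda>ks. \<Phi> (ks, ks ! (a - 1) + t)) (chains n)))"
proof -
  define E where "E t = (\<lambda>k. (k, lo a k + t)) ` chains n" for t
  define E' where "E' t = (\<lambda>k. (k, k ! (a - 1) + t)) ` chains n" for t
  define PB where "PB = (\<Union>t\<in>{..<d}. E t)"
  define PC where "PC = (if a = 0 then {} else (\<Union>t\<in>{1..d}. E' t))"
  define PU where "PU = {(ks, m). ks \<in> chains n \<and> lo a ks \<le> m \<and> (0 < a \<longrightarrow> m \<le> ks ! (a - 1) + d)}"
  have B: "\<Phi> summable_on PB \<and> infsum \<Phi> PB = (\<Sum>t<d. infsum (\<lambda>ks. \<Phi> (ks, lo a ks + t)) (chains n))"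
  proof -
    have dj: "\<And>s t. s \<noteq> t \<Longrightarrow> E s \<inter> E t = {}" by (auto simp: E_def)
    have ss: "\<And>t. t \<in> {..<d} \<Longrightarrow> \<Phi> summable_on E t" by (auto simp: E_def summable_graph sB)
    show ?thesis unfolding PB_def
      using infsum_UN_disj[of "{..<d}" \<Phi> E, OF _ ss dj] by (simp add: E_def infsum_graph)
  qed
  have C: "\<Phi> summable_on PC \<and> infsum \<Phi> PC = (if a = 0 then 0 else (\<Sum>t\<in>{1..d}. infsum (\<lambda>ks. \<Phi> (ks, ks ! (a - 1) + t)) (chains n)))"
  proof (cases "a = 0")
    case True then show ?thesis by (simp add: PC_def)
  next
    case False
    have dj: "\<And>s t. s \<noteq> t \<Longrightarrow> E' s \<inter> E' t = {}" by (auto simp: E'_def)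
    have ss: "\<And>t. t \<in> {1..d} \<Longrightarrow> \<Phi> summable_on E' t" using False sC by (simp add: E'_def summable_graph)
    show ?thesis unfolding PC_def
      using infsum_UN_disj[of "{1..d}" \<Phi> E', OF _ ss dj] False by (simp add: E'_def infsum_graph)
  qed
  have U1: "PU = PS \<union> PB" and D1: "PS \<inter> PB = {}"
  proof -
    show "PU = PS \<union> PB"
    proof (rule set_eqI, clarify)
      fix ks m
      show "(ks, m) \<in> PU \<longleftrightarrow> (ks, m) \<in> PS \<union> PB"
      proof
        assume h: "(ks, m) \<in> PU"
        show "(ks, m) \<in> PS \<union> PB"
        proof (cases "lo a ks + d \<le> m")
          case True then show ?thesis using h by (auto simp: PU_def PS_def)
        next
          case False
          then have "(ks, m) \<in> E (m - lo a ks)" using h by (auto simp: PU_def E_def)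
          moreover have "m - lo a ks \<in> {..<d}" using False h by (auto simp: PU_def)
          ultimately show ?thesis unfolding PB_def by blast
        qed
      next
        assume h: "(ks, m) \<in> PS \<union> PB"
        then show "(ks, m) \<in> PU"
          using lo_le_up[OF _ _ an, of ks]
          by (auto simp: PU_def PS_def PB_def E_def)
      qed
    qed
    show "PS \<inter> PB = {}" by (auto simp: PS_def PB_def E_def)
  qed
  have U2: "PU = P0 \<union> PC" and D2: "P0 \<inter> PC = {}"
  proof -
    show "PU = P0 \<union> PC"
    proof (rule set_eqI, clarify)
      fix ks m
      show "(ks, m) \<in> PU \<longleftrightarrow> (ks, m) \<in> P0 \<union> PC"
      proof
        assume h: "(ks, m) \<in> PU"
        show "(ks, m) \<in> P0 \<union> PC"
        proof (cases "0 < a \<and> ks ! (a - 1) < m")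
          case False then show ?thesis using h by (auto simp: PU_def P0_def)
        next
          case True
          then have "(ks, m) \<in> E' (m - ks ! (a - 1))" using h by (auto simp: PU_def E'_def)
          moreover have "m - ks ! (a - 1) \<in> {1..d}" using True h by (auto simp: PU_def)
          ultimately show ?thesis using True unfolding PC_def by auto
        qed
      next
        assume h: "(ks, m) \<in> P0 \<union> PC"
        then show "(ks, m) \<in> PU"
          using lo_le_up[OF _ _ an, of ks]
          by (auto simp: PU_def P0_def PC_def E'_def split: if_splits)
      qed
    qed
    show "P0 \<inter> PC = {}" by (auto simp: P0_def PC_def E'_def)
  qed
  have "infsum \<Phi> PU = infsum \<Phi> PS + infsum \<Phi> PB"
    unfolding U1 using infsum_Un_disjoint[OF sS B[THEN conjunct1] D1] .
  moreover have "infsum \<Phi> PU = infsum \<Phi> P0 + infsum \<Phi> PC"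
    unfolding U2 using infsum_Un_disjoint[OF s0 C[THEN conjunct1] D2] .
  ultimately show ?thesis using B C by (simp add: algebra_simps)
qed



definition CSf :: "(nat \<Rightarrow> complex) list \<Rightarrow> complex" where
  "CSf fs = infsum (PP fs) (chains (length fs))"

lemma chains_img:
  assumes "a \<le> n"
  shows "chains (Suc n) = (\<lambda>(ks, m). ins a ks m) ` {(ks, m). ks \<in> chains n \<and> lo a ks \<le> m \<and> (0 < a \<longrightarrow> m \<le> ks ! (a - 1))}"
proof (rule set_eqI)
  fix ms
  show "ms \<in> chains (Suc n) \<longleftrightarrow> ms \<in> (\<lambda>(ks, m). ins a ks m) ` {(ks, m). ks \<in> chains n \<and> lo a ks \<le> m \<and> (0 < a \<longrightarrow> m \<le> ks ! (a - 1))}"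
  proof
    assume "ms \<in> chains (Suc n)"
    then obtain ks m where "ms = ins a ks m" "ks \<in> chains n" "lo a ks \<le> m" "0 < a \<longrightarrow> m \<le> ks ! (a - 1)"
      using chains_ins[OF assms] by blast
    then show "ms \<in> (\<lambda>(ks, m). ins a ks m) ` {(ks, m). ks \<in> chains n \<and> lo a ks \<le> m \<and> (0 < a \<longrightarrow> m \<le> ks ! (a - 1))}"
      by (intro image_eqI[where x="(ks, m)"]) auto
  next
    assume "ms \<in> (\<lambda>(ks, m). ins a ks m) ` {(ks, m). ks \<in> chains n \<and> lo a ks \<le> m \<and> (0 < a \<longrightarrow> m \<le> ks ! (a - 1))}"
    then obtain ks m where "ms = ins a ks m" "ks \<in> chains n" "lo a ks \<le> m" "0 < a \<longrightarrow> m \<le> ks ! (a - 1)"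
      by auto
    then show "ms \<in> chains (Suc n)" using chains_ins[OF assms] by blast
  qed
qed

lemma inj_ins:
  assumes "a \<le> n"
  shows "inj_on (\<lambda>(ks, m). ins a ks m) {(ks, m). ks \<in> chains n \<and> Q ks m}"
proof (rule inj_onI, clarify)
  fix ks m ks' m'
  assume h: "ins a ks m = ins a ks' m'" "ks \<in> chains n" "ks' \<in> chains n"
  have l: "length ks = n" "length ks' = n" using h by (auto simp: mem_chains)
  have "take a ks = take a ks' \<and> m # drop a ks = m' # drop a ks'"
    using h(1) l assms unfolding ins_def by (subst (asm) append_eq_append_conv) auto
  then show "ks = ks' \<and> m = m'" by (metis append_take_drop_id list.inject)
qed

lemma PP_len_cong: "length ks = length xs + length ys \<Longrightarrow> length (take (length xs) ks) = length xs" by simp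

lemma CSf_P0:
  fixes xs ys :: "(nat \<Rightarrow> complex) list" and g :: "nat \<Rightarrow> complex"
  assumes "a = length xs" "n = a + length ys"
  defines "\<Phi> \<equiv> (\<lambda>(ks, m). PP xs (take a ks) * g m * PP ys (drop a ks))"
  defines "P0 \<equiv> {(ks, m). ks \<in> chains n \<and> lo a ks \<le> m \<and> (0 < a \<longrightarrow> m \<le> ks ! (a - 1))}"
  shows "CSf (xs @ g # ys) = infsum \<Phi> P0"
    and "PP (xs @ g # ys) summable_on chains (Suc n) \<longleftrightarrow> \<Phi> summable_on P0"
proof -
  have an: "a \<le> n" using assms by simp
  have len: "length (xs @ g # ys) = Suc n" using assms by simp
  have eq: "(PP (xs @ g # ys) \<circ> (\<lambda>(ks, m). ins a ks m)) x = \<Phi> x" if xP: "x \<in> P0" for x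
  proof -
    obtain ks m where x: "x = (ks, m)" and l: "length ks = a + length ys"
      using xP assms(2) by (auto simp: P0_def mem_chains)
    show ?thesis unfolding x \<Phi>_def using PP_ins[OF assms(1)[symmetric] l] by simp
  qed
  show "CSf (xs @ g # ys) = infsum \<Phi> P0"
    unfolding CSf_def len chains_img[OF an] P0_def[symmetric]
    by (subst infsum_reindex[OF inj_ins[OF an, of "\<lambda>ks m. lo a ks \<le> m \<and> (0 < a \<longrightarrow> m \<le> ks ! (a - 1))", folded P0_def]])
       (rule infsum_cong, rule eq)
  show "PP (xs @ g # ys) summable_on chains (Suc n) \<longleftrightarrow> \<Phi> summable_on P0"
    unfolding chains_img[OF an] P0_def[symmetric]
    by (subst summable_on_reindex[OF inj_ins[OF an, of "\<lambda>ks m. lo a ks \<le> m \<and> (0 < a \<longrightarrow> m \<le> ks ! (a - 1))", folded P0_def]])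
       (rule summable_on_cong, rule eq)
qed

lemma PS_img:
  "(\<lambda>(ks, m). (ks, m + d)) ` {(ks, m). ks \<in> chains n \<and> lo a ks \<le> m \<and> (0 < a \<longrightarrow> m \<le> ks ! (a - 1))}
   = {(ks, m). ks \<in> chains n \<and> lo a ks + d \<le> m \<and> (0 < a \<longrightarrow> m \<le> ks ! (a - 1) + d)}"
proof (rule set_eqI, clarify, rule iffI)
  fix ks m
  assume "(ks, m) \<in> {(ks, m). ks \<in> chains n \<and> lo a ks + d \<le> m \<and> (0 < a \<longrightarrow> m \<le> ks ! (a - 1) + d)}"
  then have "(ks, m - d) \<in> {(ks, m). ks \<in> chains n \<and> lo a ks \<le> m \<and> (0 < a \<longrightarrow> m \<le> ks ! (a - 1))}"
       and "m = m - d + d" by auto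
  then show "(ks, m) \<in> (\<lambda>(ks, m). (ks, m + d)) ` {(ks, m). ks \<in> chains n \<and> lo a ks \<le> m \<and> (0 < a \<longrightarrow> m \<le> ks ! (a - 1))}"
    by (metis (no_types, lifting) case_prod_conv image_eqI)
qed auto

lemma inj_sh: "inj_on (\<lambda>(ks, m::nat). (ks, m + d)) A"
  by (auto simp: inj_on_def)

lemma shift_CSf:
  fixes xs ys :: "(nat \<Rightarrow> complex) list" and g :: "nat \<Rightarrow> complex" and d :: nat
  assumes a: "a = length xs" and n: "n = a + length ys"
  defines "\<Phi> \<equiv> (\<lambda>(ks, m). PP xs (take a ks) * g m * PP ys (drop a ks))"
  assumes s0: "PP (xs @ g # ys) summable_on chains (Suc n)"
    and sd: "PP (xs @ (\<lambda>k. g (k + d)) # ys) summable_on chains (Suc n)"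
    and sB: "\<And>t. t < d \<Longrightarrow> (\<lambda>ks. \<Phi> (ks, lo a ks + t)) summable_on chains n"
    and sC: "\<And>t. 0 < a \<Longrightarrow> t \<in> {1..d} \<Longrightarrow> (\<lambda>ks. \<Phi> (ks, ks ! (a - 1) + t)) summable_on chains n"
  shows "CSf (xs @ (\<lambda>k. g (k + d)) # ys) = CSf (xs @ g # ys) - (\<Sum>t<d. infsum (\<lambda>ks. \<Phi> (ks, lo a ks + t)) (chains n))
          + (if a = 0 then 0 else (\<Sum>t\<in>{1..d}. infsum (\<lambda>ks. \<Phi> (ks, ks ! (a - 1) + t)) (chains n)))"
proof -
  define P0 where "P0 = {(ks, m). ks \<in> chains n \<and> lo a ks \<le> m \<and> (0 < a \<longrightarrow> m \<le> ks ! (a - 1))}"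
  define PS where "PS = {(ks, m). ks \<in> chains n \<and> lo a ks + d \<le> m \<and> (0 < a \<longrightarrow> m \<le> ks ! (a - 1) + d)}"
  have an: "a \<le> n" using n by simp
  note A0 = CSf_P0[where g=g, OF a n, folded \<Phi>_def P0_def]
  note Ad = CSf_P0[where g="\<lambda>k. g (k + d)", OF a n, folded P0_def]
  have phid: "(\<lambda>(ks, m). PP xs (take a ks) * g (m + d) * PP ys (drop a ks)) = \<Phi> \<circ> (\<lambda>(ks, m). (ks, m + d))"
    by (auto simp: \<Phi>_def)
  have PSi: "PS = (\<lambda>(ks, m). (ks, m + d)) ` P0" unfolding PS_def P0_def by (rule PS_img[symmetric])
  have sS: "\<Phi> summable_on PS"
    unfolding PSi summable_on_reindex[OF inj_sh] using Ad(2) sd phid by simp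
  have eS: "CSf (xs @ (\<lambda>k. g (k + d)) # ys) = infsum \<Phi> PS"
    unfolding PSi infsum_reindex[OF inj_sh] using Ad(1) phid by simp
  have s0': "\<Phi> summable_on P0" using A0(2) s0 by simp
  show ?thesis
    unfolding eS A0(1)
    using shift_generic[OF an, of \<Phi> d, folded P0_def PS_def, OF s0' sS sB sC] by simp
qed

lemma Phi_B_nil:
  assumes "ks \<in> chains (length xs)"
  shows "PP xs (take (length xs) ks) * g (lo (length xs) ks + t) * PP [] (drop (length xs) ks) = g (1 + t) * PP xs ks"
  using assms by (simp add: mem_chains lo_def PP_Nil)

lemma Phi_B_cons:
  assumes "ks \<in> chains (length xs + Suc (length ys))"
  shows "PP xs (take (length xs) ks) * g (lo (length xs) ks + t) * PP (f # ys) (drop (length xs) ks)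
       = PP (xs @ (\<lambda>m. g (m + t) * f m) # ys) ks"
proof -
  have l: "length ks = length xs + Suc (length ys)" using assms by (simp add: mem_chains)
  have dr: "drop (length xs) ks = ks ! length xs # drop (Suc (length xs)) ks"
    using l by (simp add: Cons_nth_drop_Suc)
  have "PP (xs @ (\<lambda>m. g (m + t) * f m) # ys) (take (length xs) ks @ drop (length xs) ks) = PP xs (take (length xs) ks) * PP ((\<lambda>m. g (m + t) * f m) # ys) (drop (length xs) ks)"
    by (rule PP_append) (use l in simp)
  then have "PP (xs @ (\<lambda>m. g (m + t) * f m) # ys) ks = PP xs (take (length xs) ks) * PP ((\<lambda>m. g (m + t) * f m) # ys) (drop (length xs) ks)"
    by simp
  then show ?thesis using l dr by (simp add: lo_def PP_Cons)
qed

lemma Phi_C: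
  assumes "ks \<in> chains (length xs + length ys)" "xs \<noteq> []"
  shows "PP xs (take (length xs) ks) * g (ks ! (length xs - 1) + t) * PP ys (drop (length xs) ks)
       = PP (butlast xs @ (\<lambda>m. last xs m * g (m + t)) # ys) ks"
proof -
  have l: "length ks = length xs + length ys" using assms by (simp add: mem_chains)
  obtain xs' f where xs: "xs = xs' @ [f]" using assms(2) by (cases xs rule: rev_exhaust) auto
  have t1: "take (length xs) ks = take (length xs') ks @ [ks ! length xs']"
    using l xs by (simp add: take_Suc_conv_app_nth)
  have t2: "drop (length xs') ks = ks ! length xs' # drop (length xs) ks"
    using l xs by (simp add: Cons_nth_drop_Suc)
  have "PP (xs' @ (\<lambda>m. f m * g (m + t)) # ys) (take (length xs') ks @ drop (length xs') ks) = PP xs' (take (length xs') ks) * PP ((\<lambda>m. f m * g (m + t)) # ys) (drop (length xs') ks)"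
    by (rule PP_append) (use l xs in simp)
  then have "PP (xs' @ (\<lambda>m. f m * g (m + t)) # ys) ks = PP xs' (take (length xs') ks) * PP ((\<lambda>m. f m * g (m + t)) # ys) (drop (length xs') ks)"
    by simp
  then show ?thesis using l xs t1 t2 by (simp add: PP_append PP_Cons PP_Nil)
qed



definition Rv :: "(rat \<times> nat \<times> int) list \<Rightarrow> nat \<Rightarrow> complex" where
  "Rv L k = (\<Sum>(c, d, s)\<leftarrow>L. of_rat c * (of_nat (k + d)) powi (- s))"

definition scaleL :: "rat \<Rightarrow> (rat \<times> nat \<times> int) list \<Rightarrow> (rat \<times> nat \<times> int) list" where
  "scaleL r L = map (\<lambda>(c, d, s). (r * c, d, s)) L"

lemma Rv_Nil[simp]: "Rv [] k = 0" by (simp add: Rv_def)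
lemma Rv_Cons: "Rv ((c, d, s) # L) k = of_rat c * (of_nat (k + d)) powi (- s) + Rv L k"
  by (simp add: Rv_def)
lemma Rv_append: "Rv (L1 @ L2) k = Rv L1 k + Rv L2 k"
  by (simp add: Rv_def)
lemma Rv_scaleL: "Rv (scaleL r L) k = of_rat r * Rv L k"
  by (induction L) (auto simp: Rv_def scaleL_def of_rat_mult algebra_simps)
lemma set_scaleL: "(c, d, s) \<in> set (scaleL r L) \<Longrightarrow> \<exists>c'. (c', d, s) \<in> set L"
  by (auto simp: scaleL_def)

lemma binom_expand:
  fixes x :: complex and m :: nat
  assumes "x \<noteq> 0"
  shows "(x + \<delta>) ^ m * x powi (- s') = (\<Sum>r<Suc m. of_nat (m choose r) * \<delta> ^ (m - r) * x powi (- (s' - int r)))"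
proof -
  have "(x + \<delta>) ^ m = (\<Sum>r\<le>m. of_nat (m choose r) * x ^ r * \<delta> ^ (m - r))"
    by (rule binomial_ring)
  also have "\<dots> = (\<Sum>r<Suc m. of_nat (m choose r) * x ^ r * \<delta> ^ (m - r))"
    by (simp add: lessThan_Suc_atMost)
  finally have "(x + \<delta>) ^ m * x powi (- s') = (\<Sum>r<Suc m. of_nat (m choose r) * x ^ r * \<delta> ^ (m - r)) * x powi (- s')"
    by simp
  also have "\<dots> = (\<Sum>r<Suc m. of_nat (m choose r) * \<delta> ^ (m - r) * (x ^ r * x powi (- s')))"
    unfolding sum_distrib_right by (rule sum.cong) (simp_all add: mult_ac)
  also have "\<dots> = (\<Sum>r<Suc m. of_nat (m choose r) * \<delta> ^ (m - r) * x powi (- (s' - int r)))"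
  proof (rule sum.cong[OF refl])
    fix r
    have "x ^ r * x powi (- s') = x powi (int r) * x powi (- s')" by (simp add: power_int_of_nat)
    also have "\<dots> = x powi (int r + - s')" by (rule power_int_add[symmetric]) (use assms in simp)
    also have "\<dots> = x powi (- (s' - int r))" by simp
    finally show "of_nat (m choose r) * \<delta> ^ (m - r) * (x ^ r * x powi (- s')) = of_nat (m choose r) * \<delta> ^ (m - r) * x powi (- (s' - int r))"
      by simp
  qed
  finally show ?thesis .
qed

lemma EP_binom:
  assumes "s \<le> 0"
  shows "\<exists>L. (\<forall>k. 1 \<le> k \<longrightarrow> (of_nat (k + d) :: complex) powi (- s) * (of_nat (k + d')) powi (- s') = Rv L k)
     \<and> (\<forall>(c, e, t)\<in>set L. e = d' \<and> t \<le> s')"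
proof -
  define m where "m = nat (- s)"
  define \<delta> where "\<delta> = (of_int (int d - int d') :: rat)"
  define L where "L = map (\<lambda>r. (of_nat (m choose r) * \<delta> ^ (m - r), d', s' - int r)) [0..<Suc m]"
  have "(of_nat (k + d) :: complex) powi (- s) * (of_nat (k + d')) powi (- s') = Rv L k" if "1 \<le> k" for k
  proof -
    have nz: "k + d' \<noteq> 0" using that by simp
    have x0: "(of_nat (k + d') :: complex) \<noteq> 0" using nz by (metis of_nat_eq_0_iff)
    have e1: "(of_nat (k + d) :: complex) = of_nat (k + d') + of_rat \<delta>"
      by (simp add: \<delta>_def of_rat_diff)
    have e2: "(of_nat (k + d) :: complex) powi (- s) = (of_nat (k + d)) ^ m"
      using assms by (simp add: m_def power_int_def)
    have RL: "Rv L k = (\<Sum>r<Suc m. of_nat (m choose r) * of_rat \<delta> ^ (m - r) * (of_nat (k + d') :: complex) powi (- (s' - int r)))"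
      unfolding Rv_def L_def by (simp add: interv_sum_list_conv_sum_set_nat atLeast0LessThan of_rat_mult of_rat_power comp_def)
    show ?thesis unfolding e2 unfolding e1 binom_expand[OF x0] RL by (rule refl)
  qed
  moreover have "\<forall>(c, e, t)\<in>set L. e = d' \<and> t \<le> s'" by (auto simp: L_def)
  ultimately show ?thesis by blast
qed

lemma PF_step:
  fixes x y :: complex
  assumes "x \<noteq> 0" "y \<noteq> 0" "y = x + \<delta>" "\<delta> \<noteq> 0"
  shows "inverse (x ^ Suc a) * inverse (y ^ Suc b) = (1 / \<delta>) * (inverse (x ^ Suc a) * inverse (y ^ b)) - (1 / \<delta>) * (inverse (x ^ a) * inverse (y ^ Suc b))"
proof -
  define P where "P = inverse (x ^ Suc a) * inverse (y ^ Suc b)"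
  have 1: "inverse (x ^ Suc a) * inverse (y ^ b) = P * y" unfolding P_def using assms(2) by (simp add: field_simps)
  have 2: "inverse (x ^ a) * inverse (y ^ Suc b) = P * x" unfolding P_def using assms(1) by (simp add: field_simps)
  show ?thesis unfolding 1 2 P_def[symmetric] using assms(3,4) by (simp add: field_simps)
qed

lemma PF:
  assumes "d \<noteq> d'"
  shows "\<exists>L. (\<forall>k. 1 \<le> k \<longrightarrow> inverse ((of_nat (k + d) :: complex) ^ a) * inverse ((of_nat (k + d')) ^ b) = Rv L k)
     \<and> (\<forall>(c, e, t)\<in>set L. e \<in> {d, d'} \<and> t \<le> int (max a b))"
proof (induction "a + b" arbitrary: a b rule: less_induct)
  case less
  show ?case
  proof (cases "a = 0 \<or> b = 0")
    case True
    then show ?thesis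
    proof
      assume a0: "a = 0"
      show ?thesis
        by (rule exI[of _ "[(1, d', int b)]"]) (auto simp: a0 Rv_Cons power_int_minus)
    next
      assume b0: "b = 0"
      show ?thesis
        by (rule exI[of _ "[(1, d, int a)]"]) (auto simp: b0 Rv_Cons power_int_minus)
    qed
  next
    case False
    then obtain a' b' where ab: "a = Suc a'" "b = Suc b'" by (meson not0_implies_Suc)
    obtain L1 where L1: "\<forall>k. 1 \<le> k \<longrightarrow> inverse ((of_nat (k + d) :: complex) ^ a) * inverse ((of_nat (k + d')) ^ b') = Rv L1 k"
      "\<forall>(c, e, t)\<in>set L1. e \<in> {d, d'} \<and> t \<le> int (max a b')"
      using less[of a b'] ab by auto
    obtain L2 where L2: "\<forall>k. 1 \<le> k \<longrightarrow> inverse ((of_nat (k + d) :: complex) ^ a') * inverse ((of_nat (k + d')) ^ b) = Rv L2 k"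
      "\<forall>(c, e, t)\<in>set L2. e \<in> {d, d'} \<and> t \<le> int (max a' b)"
      using less[of a' b] ab by auto
    define \<delta> where "\<delta> = (of_int (int d' - int d) :: rat)"
    have \<delta>0: "\<delta> \<noteq> 0" using assms by (simp add: \<delta>_def)
    define L where "L = scaleL (1 / \<delta>) L1 @ scaleL (- (1 / \<delta>)) L2"
    have "inverse ((of_nat (k + d) :: complex) ^ a) * inverse ((of_nat (k + d')) ^ b) = Rv L k" if "1 \<le> k" for k
    proof -
      have yx: "(of_nat (k + d') :: complex) = of_nat (k + d) + of_rat \<delta>"
        by (simp add: \<delta>_def of_rat_diff)
      have "Rv L k = of_rat (1 / \<delta>) * Rv L1 k - of_rat (1 / \<delta>) * Rv L2 k"
        by (simp add: L_def Rv_append Rv_scaleL of_rat_minus)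
      also have "\<dots> = inverse ((of_nat (k + d) :: complex) ^ a) * inverse ((of_nat (k + d')) ^ b)"
      proof -
        have nz: "k + d' \<noteq> 0" "k + d \<noteq> 0" using that by simp_all
        have x0: "(of_nat (k + d') :: complex) \<noteq> 0" "(of_nat (k + d) :: complex) \<noteq> 0"
          using nz by (metis of_nat_eq_0_iff)+
        have d0: "(of_rat \<delta> :: complex) \<noteq> 0" using \<delta>0 by simp
        show ?thesis
          unfolding L1(1)[rule_format, OF that, symmetric] L2(1)[rule_format, OF that, symmetric] ab
          using PF_step[OF x0(2) x0(1) yx d0, of a' b'] by (simp add: of_rat_divide)
      qed
      finally show ?thesis by simp
    qed
    moreover have "\<forall>(c, e, t)\<in>set L. e \<in> {d, d'} \<and> t \<le> int (max a b)"
      using L1(2) L2(2) ab by (fastforce simp: L_def scaleL_def)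
    ultimately show ?thesis by blast
  qed
qed



lemma of_nat_ne0: "1 \<le> k \<Longrightarrow> (of_nat (k + d) :: complex) \<noteq> 0"
  by (metis add_is_0 not_one_le_zero of_nat_eq_0_iff)

lemma EP:
  "\<exists>L. (\<forall>k. 1 \<le> k \<longrightarrow> (of_nat (k + d) :: complex) powi (- s) * (of_nat (k + d')) powi (- s') = Rv L k)
     \<and> (\<forall>(c, e, t)\<in>set L. e \<in> {d, d'} \<and> t \<le> (if d = d' then s + s' else max s s'))"
proof (cases "d = d'")
  case True
  have "(of_nat (k + d) :: complex) powi (- s) * (of_nat (k + d')) powi (- s') = Rv [(1, d, s + s')] k" if "1 \<le> k" for k
  proof -
    have "(of_nat (k + d) :: complex) powi (- s) * (of_nat (k + d)) powi (- s') = (of_nat (k + d)) powi (- s + - s')"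
      by (rule power_int_add[symmetric]) (use of_nat_ne0[OF that] in simp)
    then show ?thesis using True by (simp add: Rv_Cons)
  qed
  then show ?thesis using True by (intro exI[of _ "[(1, d, s + s')]"]) auto
next
  case False
  show ?thesis
  proof (cases "s \<le> 0")
    case True
    obtain L where L: "\<forall>k. 1 \<le> k \<longrightarrow> (of_nat (k + d) :: complex) powi (- s) * (of_nat (k + d')) powi (- s') = Rv L k"
      "\<forall>(c, e, t)\<in>set L. e = d' \<and> t \<le> s'" using EP_binom[OF True, of d d' s'] by blast
    show ?thesis using L False by (intro exI[of _ L]) fastforce
  next
    case s: False
    show ?thesis
    proof (cases "s' \<le> 0")
      case True
      obtain L where L: "\<forall>k. 1 \<le> k \<longrightarrow> (of_nat (k + d') :: complex) powi (- s') * (of_nat (k + d)) powi (- s) = Rv L k"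
        "\<forall>(c, e, t)\<in>set L. e = d \<and> t \<le> s" using EP_binom[OF True, of d' d s] by blast
      show ?thesis using L False by (intro exI[of _ L]) (fastforce simp: mult.commute)
    next
      case s': False
      obtain L where L: "\<forall>k. 1 \<le> k \<longrightarrow> inverse ((of_nat (k + d) :: complex) ^ nat s) * inverse ((of_nat (k + d')) ^ nat s') = Rv L k"
        "\<forall>(c, e, t)\<in>set L. e \<in> {d, d'} \<and> t \<le> int (max (nat s) (nat s'))" using PF[OF False, of "nat s" "nat s'"] by blast
      have e: "(x :: complex) powi (- r) = inverse (x ^ nat r)" if "0 < r" for x r
        using that by (simp add: power_int_def power_inverse)
      show ?thesis using L False s s' by (intro exI[of _ L]) (fastforce simp: e)
    qed
  qed
qed

definition EPL :: "nat \<Rightarrow> int \<Rightarrow> nat \<Rightarrow> int \<Rightarrow> (rat \<times> nat \<times> int) list" where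
  "EPL d s d' s' = (SOME L. (\<forall>k. 1 \<le> k \<longrightarrow> (of_nat (k + d) :: complex) powi (- s) * (of_nat (k + d')) powi (- s') = Rv L k)
     \<and> (\<forall>(c, e, t)\<in>set L. e \<in> {d, d'} \<and> t \<le> (if d = d' then s + s' else max s s')))"

lemma EPL:
  "1 \<le> k \<Longrightarrow> (of_nat (k + d) :: complex) powi (- s) * (of_nat (k + d')) powi (- s') = Rv (EPL d s d' s') k"
  "(c, e, t) \<in> set (EPL d s d' s') \<Longrightarrow> e \<in> {d, d'} \<and> t \<le> (if d = d' then s + s' else max s s')"
proof -
  note ex = someI_ex[OF EP[of d s d' s'], folded EPL_def]
  show "1 \<le> k \<Longrightarrow> (of_nat (k + d) :: complex) powi (- s) * (of_nat (k + d')) powi (- s') = Rv (EPL d s d' s') k"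
    using ex by blast
  show "(c, e, t) \<in> set (EPL d s d' s') \<Longrightarrow> e \<in> {d, d'} \<and> t \<le> (if d = d' then s + s' else max s s')"
    using ex by blast
qed

fun prodE :: "rat \<times> nat \<times> int \<Rightarrow> (rat \<times> nat \<times> int) list \<Rightarrow> (rat \<times> nat \<times> int) list" where
  "prodE e [] = []"
| "prodE (c, d, s) ((c', d', s') # L) = scaleL (c * c') (EPL d s d' s') @ prodE (c, d, s) L"

fun prodL :: "(rat \<times> nat \<times> int) list \<Rightarrow> (rat \<times> nat \<times> int) list \<Rightarrow> (rat \<times> nat \<times> int) list" where
  "prodL [] L' = []"
| "prodL (e # L) L' = prodE e L' @ prodL L L'"

lemma Rv_prodE: "1 \<le> k \<Longrightarrow> Rv (prodE (c, d, s) L') k = of_rat c * (of_nat (k + d)) powi (- s) * Rv L' k"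
proof (induction L')
  case Nil then show ?case by simp
next
  case (Cons e L')
  obtain c' d' s' where e: "e = (c', d', s')" by (cases e) auto
  show ?case using Cons EPL(1)[OF Cons.prems, of d s d' s', symmetric]
    by (simp add: e Rv_append Rv_scaleL Rv_Cons of_rat_mult algebra_simps)
qed

lemma Rv_prodL: "1 \<le> k \<Longrightarrow> Rv (prodL L L') k = Rv L k * Rv L' k"
proof (induction L)
  case Nil then show ?case by simp
next
  case (Cons e L)
  obtain c d s where e: "e = (c, d, s)" by (cases e) auto
  show ?case using Cons by (simp add: e Rv_append Rv_prodE Rv_Cons algebra_simps)
qed

lemma set_prodE: "(c0, e, t) \<in> set (prodE (c, d, s) L') \<Longrightarrow>
   \<exists>c' d' s'. (c', d', s') \<in> set L' \<and> e \<in> {d, d'} \<and> t \<le> (if d = d' then s + s' else max s s')"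
proof (induction L')
  case Nil then show ?case by simp
next
  case (Cons e' L')
  obtain c' d' s' where e': "e' = (c', d', s')" by (cases e') auto
  show ?case
  proof (cases "(c0, e, t) \<in> set (prodE (c, d, s) L')")
    case True
    then obtain c1 d1 s1 where h: "(c1, d1, s1) \<in> set L'" "e \<in> {d, d1}" "t \<le> (if d = d1 then s + s1 else max s s1)"
      using Cons.IH by blast
    show ?thesis using h by (intro exI[of _ c1] exI[of _ d1] exI[of _ s1]) auto
  next
    case False
    then have "(c0, e, t) \<in> set (scaleL (c * c') (EPL d s d' s'))" using Cons.prems by (simp add: e')
    then obtain c1 where "(c1, e, t) \<in> set (EPL d s d' s')" using set_scaleL by blast
    then show ?thesis using EPL(2) e' by fastforce
  qed
qed

lemma set_prodL: "(c0, e, t) \<in> set (prodL L L') \<Longrightarrow>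
   \<exists>c d s c' d' s'. (c, d, s) \<in> set L \<and> (c', d', s') \<in> set L' \<and> e \<in> {d, d'} \<and> t \<le> (if d = d' then s + s' else max s s')"
proof (induction L)
  case Nil then show ?case by simp
next
  case (Cons x L)
  obtain c d s where x: "x = (c, d, s)" by (cases x) auto
  show ?case
  proof (cases "(c0, e, t) \<in> set (prodE (c, d, s) L')")
    case True
    then obtain c1 d1 s1 where h: "(c1, d1, s1) \<in> set L'" "e \<in> {d, d1}" "t \<le> (if d = d1 then s + s1 else max s s1)"
      using set_prodE by blast
    show ?thesis using h by (intro exI[of _ c] exI[of _ d] exI[of _ s] exI[of _ c1] exI[of _ d1] exI[of _ s1]) (auto simp: x)
  next
    case False
    then have "(c0, e, t) \<in> set (prodL L L')" using Cons.prems by (simp add: x)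
    then obtain c2 d2 s2 c1 d1 s1 where h: "(c2, d2, s2) \<in> set L" "(c1, d1, s1) \<in> set L'" "e \<in> {d2, d1}" "t \<le> (if d2 = d1 then s2 + s1 else max s2 s1)"
      using Cons.IH by blast
    show ?thesis using h by (intro exI[of _ c2] exI[of _ d2] exI[of _ s2] exI[of _ c1] exI[of _ d1] exI[of _ s1]) auto
  qed
qed

definition wt :: "(rat \<times> nat \<times> int) list \<Rightarrow> nat" where
  "wt L = foldr (\<lambda>(c, d, s) m. max (nat s) m) L 0"

lemma wt_ub: "(c, d, s) \<in> set L \<Longrightarrow> s \<le> int (wt L)"
  by (induction L) (auto simp: wt_def)

lemma wt_le': "(\<forall>(c, d, s)\<in>set L. s \<le> int a) \<Longrightarrow> wt L \<le> a"
  by (induction L) (auto simp: wt_def)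

lemma wt_le: "(\<And>c d s. (c, d, s) \<in> set L \<Longrightarrow> s \<le> int a) \<Longrightarrow> wt L \<le> a"
  by (rule wt_le') auto

lemma wt_prodL: "wt (prodL L L') \<le> wt L + wt L'"
proof (rule wt_le)
  fix c e t assume "(c, e, t) \<in> set (prodL L L')"
  then obtain c1 d s c' d' s' where "(c1, d, s) \<in> set L" "(c', d', s') \<in> set L'"
    "t \<le> (if d = d' then s + s' else max s s')" using set_prodL by blast
  then show "t \<le> int (wt L + wt L')" using wt_ub[of c1 d s L] wt_ub[of c' d' s' L'] by (auto split: if_splits)
qed

lemma Rv_bound: "\<exists>M N. 0 \<le> M \<and> (\<forall>k. 1 \<le> k \<longrightarrow> norm (Rv L k) \<le> M * real k ^ N)"
proof (induction L)
  case Nil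
  then show ?case by (intro exI[of _ 0]) auto
next
  case (Cons e L)
  obtain c d s where e: "e = (c, d, s)" by (cases e) auto
  obtain M N where MN: "0 \<le> M" "\<forall>k. 1 \<le> k \<longrightarrow> norm (Rv L k) \<le> M * real k ^ N" using Cons by blast
  define N1 where "N1 = nat (- s)"
  define M1 where "M1 = norm (of_rat c :: complex) * (1 + real d) ^ N1"
  have b1: "norm ((of_rat c :: complex) * (of_nat (k + d)) powi (- s)) \<le> M1 * real k ^ N1" if k: "1 \<le> k" for k
  proof -
    have y1: "1 \<le> real (k + d)" using k by simp
    have "norm ((of_nat (k + d) :: complex) powi (- s)) = real (k + d) powi (- s)"
      by (simp only: norm_power_int norm_of_nat)
    also have "\<dots> \<le> ((1 + real d) * real k) ^ N1"
    proof (cases "0 \<le> s")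
      case True
      have "real (k + d) powi (- s) = inverse (real (k + d) ^ nat s)"
        using True by (simp add: power_int_def power_inverse)
      also have "\<dots> \<le> 1" using y1 one_le_power[OF y1, of "nat s"] by (simp add: inverse_le_1_iff)
      also have "1 \<le> ((1 + real d) * real k) ^ N1"
      proof (intro one_le_power)
        have "(1::real) * 1 \<le> (1 + real d) * real k" using k by (intro mult_mono) auto
        then show "1 \<le> (1 + real d) * real k" by simp
      qed
      finally show ?thesis .
    next
      case False
      have "real (k + d) powi (- s) = real (k + d) ^ N1"
        using False by (simp add: power_int_def N1_def)
      also have "\<dots> \<le> ((1 + real d) * real k) ^ N1"
      proof (intro power_mono)
        have "real d * 1 \<le> real d * real k" using k by (intro mult_left_mono) auto
        then show "real (k + d) \<le> (1 + real d) * real k" by (simp add: algebra_simps)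
      qed simp
      finally show ?thesis .
    qed
    finally have "norm ((of_nat (k + d) :: complex) powi (- s)) \<le> ((1 + real d) * real k) ^ N1" .
    then show ?thesis unfolding M1_def norm_mult power_mult_distrib
      by (simp add: mult.assoc mult_left_mono)
  qed
  have M10: "0 \<le> M1" by (simp add: M1_def)
  show ?case
  proof (intro exI[of _ "M1 + M"] exI[of _ "max N1 N"] conjI allI impI)
    show "0 \<le> M1 + M" using M10 MN by simp
    fix k :: nat assume k: "1 \<le> k"
    have p1: "real k ^ N1 \<le> real k ^ max N1 N" "real k ^ N \<le> real k ^ max N1 N"
      using k by (auto intro!: power_increasing)
    have "norm (Rv (e # L) k) \<le> norm ((of_rat c :: complex) * (of_nat (k + d)) powi (- s)) + norm (Rv L k)"
      by (simp add: e Rv_Cons norm_triangle_ineq)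
    also have "\<dots> \<le> M1 * real k ^ N1 + M * real k ^ N" using b1[OF k] MN k by (intro add_mono) auto
    also have "\<dots> \<le> M1 * real k ^ max N1 N + M * real k ^ max N1 N"
      using p1 M10 MN by (intro add_mono mult_left_mono) auto
    finally show "norm (Rv (e # L) k) \<le> (M1 + M) * real k ^ max N1 N" by (simp add: algebra_simps)
  qed
qed



lemma summable_poly_geom_pos:
  fixes r :: real
  assumes r0: "0 < r" and r1: "r < 1"
  shows "summable (\<lambda>n. real n ^ N * r ^ n)"
proof -
  define \<rho> where "\<rho> = (1 + r) / 2"
  have \<rho>1: "\<rho> < 1" and r\<rho>: "r < \<rho>" using r1 by (auto simp: \<rho>_def)
  have lim: "(\<lambda>n. (1 + 1 / real n) ^ N) \<longlonglongrightarrow> (1 + 0) ^ N"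
    by (intro tendsto_intros lim_inverse_n')
  have "1 < \<rho> / r" using r\<rho> r0 by simp
  then have "eventually (\<lambda>n. (1 + 1 / real n) ^ N < \<rho> / r) sequentially"
    using lim by (intro order_tendstoD(2)) auto
  then obtain N0 where N0: "\<And>n. n \<ge> N0 \<Longrightarrow> (1 + 1 / real n) ^ N < \<rho> / r"
    by (auto simp: eventually_sequentially)
  show ?thesis
  proof (rule summable_ratio_test[OF \<rho>1, of "max N0 1"])
    fix n assume n: "max N0 1 \<le> n"
    then have n1: "1 \<le> n" and nN: "N0 \<le> n" by auto
    have e: "real (Suc n) = (1 + 1 / real n) * real n" using n1 by (simp add: field_simps)
    have e2: "real (Suc n) ^ N = (1 + 1 / real n) ^ N * real n ^ N" by (simp only: e power_mult_distrib)
    have "norm (real (Suc n) ^ N * r ^ Suc n) = (1 + 1 / real n) ^ N * (real n ^ N * r ^ n) * r"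
      unfolding e2 using r0 by (simp add: algebra_simps)
    also have "\<dots> \<le> (\<rho> / r) * (real n ^ N * r ^ n) * r"
      using N0[OF nN] r0 by (intro mult_right_mono mult_right_mono) auto
    also have "\<dots> = \<rho> * norm (real n ^ N * r ^ n)" using r0 by simp
    finally show "norm (real (Suc n) ^ N * r ^ Suc n) \<le> \<rho> * norm (real n ^ N * r ^ n)" .
  qed
qed

lemma summable_poly_geom:
  fixes r :: real
  assumes r0: "0 \<le> r" and r1: "r < 1"
  shows "summable (\<lambda>n. real n ^ N * r ^ n)"
proof -
  define r' where "r' = max r (1/2)"
  have "summable (\<lambda>n. real n ^ N * r' ^ n)" by (rule summable_poly_geom_pos) (use r1 in \<open>auto simp: r'_def\<close>)
  then show ?thesis
    by (rule summable_comparison_test'[where N=0])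
       (use r0 in \<open>auto simp: r'_def intro!: mult_left_mono power_mono\<close>)
qed

lemma chains_hd_bound: "ks \<in> chains q \<Longrightarrow> k \<in> set ks \<Longrightarrow> 1 \<le> k \<and> k \<le> hd ks"
  unfolding mem_chains by (cases ks) auto

lemma card_chains_hd: "card {ks \<in> F. hd ks = K} \<le> K ^ q" if "F \<subseteq> chains q" "finite F"
proof -
  have "{ks \<in> F. hd ks = K} \<subseteq> {xs. set xs \<subseteq> {1..K} \<and> length xs = q}"
    using that chains_hd_bound by (fastforce simp: mem_chains)
  then have "card {ks \<in> F. hd ks = K} \<le> card {xs. set xs \<subseteq> {1..K} \<and> length xs = q}"
    by (intro card_mono) (auto intro: finite_lists_length_eq)
  also have "\<dots> = K ^ q" by (simp add: card_lists_length_eq)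
  finally show ?thesis .
qed

lemma summable_chains_hd:
  fixes r :: real
  assumes "0 \<le> r" "r < 1" "0 \<le> A"
  shows "(\<lambda>ks. A * real (hd ks) ^ N * r ^ (hd ks)) summable_on chains q"
proof (rule nonneg_bdd_above_summable_on)
  define \<phi> where "\<phi> K = A * real K ^ N * r ^ K" for K
  show "\<And>x. x \<in> chains q \<Longrightarrow> 0 \<le> A * real (hd x) ^ N * r ^ hd x" using assms by simp
  have sm: "summable (\<lambda>K. real K ^ (q + N) * r ^ K)" by (rule summable_poly_geom) (use assms in auto)
  have sm': "summable (\<lambda>K. A * (real K ^ (q + N) * r ^ K))" by (rule summable_mult[OF sm])
  show "bdd_above (sum (\<lambda>ks. A * real (hd ks) ^ N * r ^ hd ks) ` {F. F \<subseteq> chains q \<and> finite F})"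
  proof (rule bdd_aboveI2)
    fix F assume F: "F \<in> {F. F \<subseteq> chains q \<and> finite F}"
    then have Fs: "F \<subseteq> chains q" and Ff: "finite F" by auto
    have "sum (\<lambda>ks. A * real (hd ks) ^ N * r ^ hd ks) F = (\<Sum>K\<in>hd ` F. sum (\<lambda>ks. \<phi> (hd ks)) {x \<in> F. hd x = K})"
      unfolding \<phi>_def by (rule sum.image_gen[OF Ff])
    also have "\<dots> = (\<Sum>K\<in>hd ` F. real (card {x \<in> F. hd x = K}) * \<phi> K)"
      by (rule sum.cong[OF refl]) simp
    also have "\<dots> \<le> (\<Sum>K\<in>hd ` F. A * (real K ^ (q + N) * r ^ K))"
    proof (rule sum_mono)
      fix K
      have "real (card {x \<in> F. hd x = K}) \<le> real K ^ q"
        using card_chains_hd[OF Fs Ff, of K] by (metis of_nat_le_iff of_nat_power)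
      then have "real (card {x \<in> F. hd x = K}) * \<phi> K \<le> real K ^ q * \<phi> K"
        using assms by (intro mult_right_mono) (auto simp: \<phi>_def)
      then show "real (card {x \<in> F. hd x = K}) * \<phi> K \<le> A * (real K ^ (q + N) * r ^ K)"
        by (simp add: \<phi>_def power_add algebra_simps)
    qed
    also have "\<dots> \<le> (\<Sum>K. A * (real K ^ (q + N) * r ^ K))"
      by (rule sum_le_suminf[OF sm']) (use Ff assms in auto)
    finally show "sum (\<lambda>ks. A * real (hd ks) ^ N * r ^ hd ks) F \<le> (\<Sum>K. A * (real K ^ (q + N) * r ^ K))" .
  qed
qed

definition wJ :: "(nat \<Rightarrow> complex) \<Rightarrow> nat set \<Rightarrow> complex" where
  "wJ z J = 1 / (\<Prod>j\<in>J. z j)"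

definition fac :: "(nat \<Rightarrow> complex) \<Rightarrow> nat set \<times> (rat \<times> nat \<times> int) list \<Rightarrow> nat \<Rightarrow> complex" where
  "fac z F k = wJ z (fst F) ^ k * Rv (snd F) k"

definition Dom :: "nat \<Rightarrow> (nat \<Rightarrow> complex) \<Rightarrow> bool" where
  "Dom p z \<longleftrightarrow> 1 < norm (z 0) \<and> (\<forall>j<p. 1 \<le> norm (z j))"

lemma prod_norm_ge1: "Dom p z \<Longrightarrow> J \<subseteq> {..<p} \<Longrightarrow> 1 \<le> norm (\<Prod>j\<in>J. z j)"
  unfolding prod_norm[symmetric] Dom_def by (intro prod_ge_1) auto

lemma norm_wJ_le: "Dom p z \<Longrightarrow> J \<subseteq> {..<p} \<Longrightarrow> norm (wJ z J) \<le> 1"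
  using prod_norm_ge1[of p z J] by (simp add: wJ_def norm_divide divide_le_eq)

lemma norm_wJ_lt: assumes "Dom p z" "J \<subseteq> {..<p}" "0 \<in> J" shows "norm (wJ z J) < 1"
proof -
  have f: "finite J" using assms(2) finite_subset by blast
  have "norm (\<Prod>j\<in>J. z j) = norm (z 0) * norm (\<Prod>j\<in>J - {0}. z j)"
    using prod.remove[OF f assms(3), of z] by (simp add: norm_mult)
  moreover have "1 \<le> norm (\<Prod>j\<in>J - {0}. z j)" using prod_norm_ge1[OF assms(1), of "J - {0}"] assms(2) by auto
  moreover have "1 < norm (z 0)" using assms(1) by (simp add: Dom_def)
  ultimately have "1 < norm (\<Prod>j\<in>J. z j)"
  proof -
    assume a: "norm (\<Prod>j\<in>J. z j) = norm (z 0) * norm (\<Prod>j\<in>J - {0}. z j)"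
      "1 \<le> norm (\<Prod>j\<in>J - {0}. z j)" "1 < norm (z 0)"
    have "norm (z 0) * 1 \<le> norm (z 0) * norm (\<Prod>j\<in>J - {0}. z j)"
      using a by (intro mult_left_mono) auto
    then show ?thesis using a by simp
  qed
  then show ?thesis by (simp add: wJ_def norm_divide divide_less_eq)
qed

lemma fac_bound:
  assumes "Dom p z" "fst F \<subseteq> {..<p}"
  shows "\<exists>M N. 0 \<le> M \<and> (\<forall>k. 1 \<le> k \<longrightarrow> norm (fac z F k) \<le> norm (wJ z (fst F)) ^ k * (M * real k ^ N))"
proof -
  obtain M N where MN: "0 \<le> M" "\<forall>k. 1 \<le> k \<longrightarrow> norm (Rv (snd F) k) \<le> M * real k ^ N"
    using Rv_bound by blast
  show ?thesis
    by (intro exI[of _ M] exI[of _ N]) (use MN in \<open>auto simp: fac_def norm_mult norm_power intro!: mult_left_mono\<close>)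
qed

lemma tail_bound:
  assumes "Dom p z" "\<forall>F\<in>set Fs. fst F \<subseteq> {..<p}"
  shows "\<exists>C N. 0 \<le> C \<and> (\<forall>K ks. length ks = length Fs \<longrightarrow> (\<forall>k\<in>set ks. 1 \<le> k \<and> k \<le> K) \<longrightarrow>
           norm (PP (map (fac z) Fs) ks) \<le> C * real K ^ N)"
  using assms(2)
proof (induction Fs)
  case Nil
  then show ?case by (intro exI[of _ 1] exI[of _ 0]) (auto simp: PP_Nil)
next
  case (Cons F Fs)
  obtain C N where CN: "0 \<le> C" "\<forall>K ks. length ks = length Fs \<longrightarrow> (\<forall>k\<in>set ks. 1 \<le> k \<and> k \<le> K) \<longrightarrow>
           norm (PP (map (fac z) Fs) ks) \<le> C * real K ^ N" using Cons by auto
  obtain M N1 where MN: "0 \<le> M" "\<forall>k. 1 \<le> k \<longrightarrow> norm (fac z F k) \<le> norm (wJ z (fst F)) ^ k * (M * real k ^ N1)"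
    using fac_bound[OF assms(1), of F] Cons.prems by auto
  have w1: "norm (wJ z (fst F)) \<le> 1" using norm_wJ_le[OF assms(1)] Cons.prems by auto
  show ?case
  proof (intro exI[of _ "M * C"] exI[of _ "N1 + N"] conjI allI impI)
    show "0 \<le> M * C" using MN CN by simp
    fix K :: nat and ks :: "nat list" assume l: "length ks = length (F # Fs)" and b: "\<forall>k\<in>set ks. 1 \<le> k \<and> k \<le> K"
    obtain k ks' where ks: "ks = k # ks'" using l by (cases ks) auto
    have k: "1 \<le> k" "k \<le> K" using b ks by auto
    have "norm (fac z F k) \<le> norm (wJ z (fst F)) ^ k * (M * real k ^ N1)" using MN k by auto
    also have "\<dots> \<le> 1 * (M * real K ^ N1)"
      using w1 k MN by (intro mult_mono power_le_one mult_left_mono power_mono) auto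
    finally have f1: "norm (fac z F k) \<le> M * real K ^ N1" by simp
    have f2: "norm (PP (map (fac z) Fs) ks') \<le> C * real K ^ N" using CN l b ks by auto
    have "norm (PP (map (fac z) (F # Fs)) ks) = norm (fac z F k) * norm (PP (map (fac z) Fs) ks')"
      by (simp add: ks PP_Cons norm_mult)
    also have "\<dots> \<le> (M * real K ^ N1) * (C * real K ^ N)"
      using f1 f2 MN(1) by (intro mult_mono) auto
    finally show "norm (PP (map (fac z) (F # Fs)) ks) \<le> M * C * real K ^ (N1 + N)"
      by (simp add: power_add algebra_simps)
  qed
qed

definition Jok :: "nat \<Rightarrow> (nat set \<times> (rat \<times> nat \<times> int) list) list \<Rightarrow> bool" where
  "Jok p Fs \<longleftrightarrow> (\<forall>F\<in>set Fs. fst F \<noteq> {} \<and> fst F \<subseteq> {..<p}) \<and> (Fs \<noteq> [] \<longrightarrow> 0 \<in> fst (hd Fs))"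

lemma summable_PP:
  assumes D: "Dom p z" and J: "Jok p Fs"
  shows "PP (map (fac z) Fs) summable_on chains (length Fs)"
proof (cases Fs)
  case Nil
  have "chains 0 = {[]}" by (auto simp: mem_chains)
  then show ?thesis using Nil by simp
next
  case (Cons F Fs')
  have JF: "fst F \<subseteq> {..<p}" "0 \<in> fst F" "\<forall>F\<in>set Fs'. fst F \<subseteq> {..<p}" using J Cons by (auto simp: Jok_def)
  obtain C N where CN: "0 \<le> C" "\<forall>K ks. length ks = length Fs' \<longrightarrow> (\<forall>k\<in>set ks. 1 \<le> k \<and> k \<le> K) \<longrightarrow>
           norm (PP (map (fac z) Fs') ks) \<le> C * real K ^ N" using tail_bound[OF D JF(3)] by blast
  obtain M N1 where MN: "0 \<le> M" "\<forall>k. 1 \<le> k \<longrightarrow> norm (fac z F k) \<le> norm (wJ z (fst F)) ^ k * (M * real k ^ N1)"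
    using fac_bound[OF D JF(1)] by auto
  define r where "r = norm (wJ z (fst F))"
  have r: "0 \<le> r" "r < 1" using norm_wJ_lt[OF D JF(1,2)] by (auto simp: r_def)
  have sg: "(\<lambda>ks. (M * C) * real (hd ks) ^ (N1 + N) * r ^ (hd ks)) summable_on chains (length Fs)"
    by (rule summable_chains_hd) (use r MN CN in auto)
  have bd: "norm (PP (map (fac z) Fs) ks) \<le> (M * C) * real (hd ks) ^ (N1 + N) * r ^ (hd ks)"
    if ks: "ks \<in> chains (length Fs)" for ks
  proof -
    obtain k ks' where kk: "ks = k # ks'" using ks Cons by (cases ks) (auto simp: mem_chains)
    have b: "\<forall>x\<in>set ks'. 1 \<le> x \<and> x \<le> k" using chains_hd_bound[OF ks] kk by auto
    have k1: "1 \<le> k" using chains_hd_bound[OF ks] kk by auto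
    have l: "length ks' = length Fs'" using ks kk Cons by (simp add: mem_chains)
    have "norm (PP (map (fac z) Fs) ks) = norm (fac z F k) * norm (PP (map (fac z) Fs') ks')"
      by (simp add: Cons kk PP_Cons norm_mult)
    also have "\<dots> \<le> (r ^ k * (M * real k ^ N1)) * (C * real k ^ N)"
      using MN k1 CN l b by (intro mult_mono) (auto simp: r_def)
    finally show ?thesis by (simp add: kk power_add algebra_simps)
  qed
  have "(\<lambda>ks. norm (PP (map (fac z) Fs) ks)) summable_on chains (length Fs)"
    by (rule Infinite_Sum.abs_summable_on_comparison_test'[OF sg bd])
  then show ?thesis using summable_on_iff_abs_summable_on_complex by blast
qed



type_synonym Tterm = "((nat \<Rightarrow> int) \<times> rat) list \<times> int list \<times> nat set list"

definition okE :: "nat \<Rightarrow> nat \<Rightarrow> Tterm \<Rightarrow> bool" where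
  "okE p W x = (case x of (L, s, I) \<Rightarrow> length s \<le> p \<and> length I = length s \<and>
        (\<forall>i<length s. I ! i \<noteq> {} \<and> I ! i \<subseteq> {..<p}) \<and>
        (\<Sum>i<length s. max (s ! i) 0) \<le> int W)"

definition evT :: "nat \<Rightarrow> (nat \<Rightarrow> complex) \<Rightarrow> Tterm list \<Rightarrow> complex" where
  "evT p z T = (\<Sum>(L, s, I)\<leftarrow>T. laurent_eval L p z * La s (map (\<lambda>J. 1 / (\<Prod>j\<in>J. z j)) I))"

definition inV :: "nat \<Rightarrow> nat \<Rightarrow> ((nat \<Rightarrow> complex) \<Rightarrow> complex) \<Rightarrow> bool" where
  "inV p W F \<longleftrightarrow> (\<exists>T. (\<forall>x\<in>set T. okE p W x) \<and> (\<forall>z. Dom p z \<longrightarrow> F z = evT p z T))"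

lemma okE_L: "okE p W (L, s, I) \<longleftrightarrow> okE p W (L', s, I)"
  by (simp add: okE_def)

lemma evT_append: "evT p z (T1 @ T2) = evT p z T1 + evT p z T2"
  by (simp add: evT_def)

lemma evT_Cons: "evT p z ((L, s, I) # T) = laurent_eval L p z * La s (map (\<lambda>J. 1 / (\<Prod>j\<in>J. z j)) I) + evT p z T"
  by (simp add: evT_def)

lemma evT_Nil: "evT p z [] = 0"
  by (simp add: evT_def)

lemma evT_mapL:
  assumes "\<And>L. laurent_eval (h L) p z = k * laurent_eval L p z"
  shows "evT p z (map (\<lambda>(L, s, I). (h L, s, I)) T) = k * evT p z T"
proof (induction T)
  case Nil then show ?case by (simp add: evT_Nil)
next
  case (Cons x T)
  obtain L s I where x: "x = (L, s, I)" by (cases x) auto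
  have "evT p z (map (\<lambda>(L, s, I). (h L, s, I)) (x # T)) = laurent_eval (h L) p z * La s (map (\<lambda>J. 1 / (\<Prod>j\<in>J. z j)) I) + evT p z (map (\<lambda>(L, s, I). (h L, s, I)) T)"
    by (simp add: x evT_Cons)
  also have "\<dots> = k * (laurent_eval L p z * La s (map (\<lambda>J. 1 / (\<Prod>j\<in>J. z j)) I)) + k * evT p z T"
    by (simp only: assms Cons.IH mult.assoc)
  also have "\<dots> = k * evT p z (x # T)" by (simp add: x evT_Cons distrib_left)
  finally show ?case .
qed

lemma okE_mapL:
  assumes "\<forall>x\<in>set T. okE p W x"
  shows "\<forall>x\<in>set (map (\<lambda>(L, s, I). (h L, s, I)) T). okE p W x"
proof
  fix x assume "x \<in> set (map (\<lambda>(L, s, I). (h L, s, I)) T)"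
  then obtain y where y: "y \<in> set T" "x = (\<lambda>(L, s, I). (h L, s, I)) y" by auto
  obtain L s I where yy: "y = (L, s, I)" by (cases y) auto
  have "okE p W (L, s, I)" using assms y yy by blast
  then show "okE p W x" using y yy okE_L[of p W L s I "h L"] by simp
qed

lemma inV_zero: "inV p W (\<lambda>z. 0)"
  unfolding inV_def by (intro exI[of _ "[]"]) (simp add: evT_Nil)

lemma inV_add:
  assumes "inV p W F" "inV p W G"
  shows "inV p W (\<lambda>z. F z + G z)"
proof -
  obtain T1 where T1: "\<forall>x\<in>set T1. okE p W x" "\<forall>z. Dom p z \<longrightarrow> F z = evT p z T1"
    using assms(1) unfolding inV_def by blast
  obtain T2 where T2: "\<forall>x\<in>set T2. okE p W x" "\<forall>z. Dom p z \<longrightarrow> G z = evT p z T2"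
    using assms(2) unfolding inV_def by blast
  have "\<forall>x\<in>set (T1 @ T2). okE p W x" using T1(1) T2(1) by auto
  moreover have "\<forall>z. Dom p z \<longrightarrow> F z + G z = evT p z (T1 @ T2)" using T1(2) T2(2) by (simp add: evT_append)
  ultimately show ?thesis unfolding inV_def by blast
qed

lemma laurent_eval_scale:
  "laurent_eval (map (\<lambda>(e, c'). (e, c * c')) L) p z = of_rat c * laurent_eval L p z"
proof (induction L)
  case Nil then show ?case by (simp add: laurent_eval_def)
next
  case (Cons x L)
  obtain e c' where x: "x = (e, c')" by (cases x) auto
  show ?case using Cons by (simp add: x laurent_eval_def of_rat_mult distrib_left mult.assoc)
qed

lemma inV_scale:
  assumes "inV p W F"
  shows "inV p W (\<lambda>z. of_rat c * F z)"
proof -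
  obtain T where T: "\<forall>x\<in>set T. okE p W x" "\<forall>z. Dom p z \<longrightarrow> F z = evT p z T"
    using assms(1) unfolding inV_def by blast
  define h where "h L = map (\<lambda>(e, c'). (e, c * c')) L" for L :: "((nat \<Rightarrow> int) \<times> rat) list"
  have E: "evT p z (map (\<lambda>(L, s, I). (h L, s, I)) T) = of_rat c * evT p z T" for z
    by (rule evT_mapL) (simp add: h_def laurent_eval_scale)
  have "\<forall>z. Dom p z \<longrightarrow> of_rat c * F z = evT p z (map (\<lambda>(L, s, I). (h L, s, I)) T)"
    using T(2) by (simp only: E) simp
  then show ?thesis unfolding inV_def using okE_mapL[OF T(1), of h] by blast
qed

lemma inV_neg: "inV p W F \<Longrightarrow> inV p W (\<lambda>z. - F z)"
  using inV_scale[of p W F "-1"] by simp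

lemma inV_diff: "inV p W F \<Longrightarrow> inV p W G \<Longrightarrow> inV p W (\<lambda>z. F z - G z)"
  using inV_add[of p W F "\<lambda>z. - G z"] inV_neg[of p W G] by simp

lemma inV_cong: "inV p W F \<Longrightarrow> (\<And>z. Dom p z \<Longrightarrow> F z = G z) \<Longrightarrow> inV p W G"
  unfolding inV_def by auto

lemma inV_sum: "finite A \<Longrightarrow> (\<And>t. t \<in> A \<Longrightarrow> inV p W (F t)) \<Longrightarrow> inV p W (\<lambda>z. \<Sum>t\<in>A. F t z)"
proof (induction A rule: finite_induct)
  case empty then show ?case by (simp add: inV_zero)
next
  case (insert x A)
  then show ?case using inV_add[of p W "F x" "\<lambda>z. \<Sum>t\<in>A. F t z"] by simp
qed

lemma inV_sum_list: "(\<And>x. x \<in> set xs \<Longrightarrow> inV p W (F x)) \<Longrightarrow> inV p W (\<lambda>z. \<Sum>x\<leftarrow>xs. F x z)"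
proof (induction xs)
  case Nil then show ?case by (simp add: inV_zero)
next
  case (Cons a xs)
  then show ?case using inV_add[of p W "F a" "\<lambda>z. \<Sum>x\<leftarrow>xs. F x z"] by simp
qed

lemma laurent_eval_mono:
  assumes "\<forall>j<p. z j \<noteq> 0"
  shows "laurent_eval (map (\<lambda>(e', c). (\<lambda>j. e j + e' j, c)) L) p z = (\<Prod>j<p. z j powi e j) * laurent_eval L p z"
proof (induction L)
  case Nil then show ?case by (simp add: laurent_eval_def)
next
  case (Cons x L)
  obtain e' c where x: "x = (e', c)" by (cases x) auto
  have "(\<Prod>j<p. z j powi (e j + e' j)) = (\<Prod>j<p. z j powi e j) * (\<Prod>j<p. z j powi e' j)"
    unfolding prod.distrib[symmetric] by (rule prod.cong[OF refl]) (use assms in \<open>simp add: power_int_add\<close>)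
  then show ?case using Cons by (simp add: x laurent_eval_def distrib_left mult.assoc mult.left_commute)
qed

lemma inV_mono:
  assumes "inV p W F"
  shows "inV p W (\<lambda>z. (\<Prod>j<p. z j powi e j) * F z)"
proof -
  obtain T where T: "\<forall>x\<in>set T. okE p W x" "\<forall>z. Dom p z \<longrightarrow> F z = evT p z T"
    using assms(1) unfolding inV_def by blast
  define h where "h L = map (\<lambda>(e', c). (\<lambda>j. e j + e' j, c)) L" for L :: "((nat \<Rightarrow> int) \<times> rat) list"
  have "(\<Prod>j<p. z j powi e j) * F z = evT p z (map (\<lambda>(L, s, I). (h L, s, I)) T)" if "Dom p z" for z
  proof -
    have nz: "\<forall>j<p. z j \<noteq> 0" using that by (auto simp: Dom_def)
    have E: "evT p z (map (\<lambda>(L, s, I). (h L, s, I)) T) = (\<Prod>j<p. z j powi e j) * evT p z T"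
      by (rule evT_mapL) (simp add: h_def laurent_eval_mono[OF nz])
    show ?thesis unfolding E using T(2) that by simp
  qed
  then show ?thesis unfolding inV_def using okE_mapL[OF T(1), of h] by blast
qed

lemma prod_powi: "finite J \<Longrightarrow> (\<Prod>j\<in>J. (f j :: complex)) powi m = (\<Prod>j\<in>J. f j powi m)"
  by (induction J rule: finite_induct) (auto simp: power_int_mult_distrib)

lemma wJ_powi:
  assumes "J \<subseteq> {..<p}" "\<forall>j<p. z j \<noteq> 0"
  shows "wJ z J powi m = (\<Prod>j<p. z j powi (if j \<in> J then - m else 0))"
proof -
  have f: "finite J" using assms(1) finite_subset by blast
  have "wJ z J powi m = (\<Prod>j\<in>J. z j) powi (- m)"
    by (simp add: wJ_def power_int_minus divide_inverse power_int_inverse)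
  also have "\<dots> = (\<Prod>j\<in>J. z j powi (- m))" by (rule prod_powi[OF f])
  also have "\<dots> = (\<Prod>j\<in>{..<p} \<inter> J. z j powi (- m))" using assms(1) by (simp add: Int_absorb1)
  also have "\<dots> = (\<Prod>j<p. if j \<in> J then z j powi (- m) else 1)" by (rule prod.inter_restrict) simp
  also have "\<dots> = (\<Prod>j<p. z j powi (if j \<in> J then - m else 0))" by (rule prod.cong) auto
  finally show ?thesis .
qed

lemma inV_wmul:
  assumes "inV p W F" "J \<subseteq> {..<p}"
  shows "inV p W (\<lambda>z. wJ z J powi m * F z)"
proof (rule inV_cong[OF inV_mono[OF assms(1), of "\<lambda>j. if j \<in> J then - m else 0"]])
  fix z assume "Dom p z"
  then have "\<forall>j<p. z j \<noteq> 0" by (auto simp: Dom_def)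
  then show "(\<Prod>j<p. z j powi (if j \<in> J then - m else 0)) * F z = wJ z J powi m * F z"
    using wJ_powi[OF assms(2)] by simp
qed

lemma inV_La:
  assumes "okE p W (L0, s, I)"
  shows "inV p W (\<lambda>z. La s (map (wJ z) I))"
proof -
  have "okE p W ([(\<lambda>_. 0, 1)], s, I)" using okE_L[of p W L0 s I "[(\<lambda>_. 0, 1)]"] assms by simp
  then have "\<forall>x\<in>set [([(\<lambda>_. 0, 1)], s, I)]. okE p W x" by simp
  moreover have "La s (map (wJ z) I) = evT p z [([(\<lambda>_. 0, 1)], s, I)]" for z
  proof -
    have w: "wJ z = (\<lambda>J. 1 / (\<Prod>j\<in>J. z j))" by (rule ext) (simp add: wJ_def)
    show ?thesis by (simp add: evT_def laurent_eval_def w)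
  qed
  ultimately show ?thesis unfolding inV_def by blast
qed

lemma inV_mono_W: "inV p W F \<Longrightarrow> W \<le> W' \<Longrightarrow> inV p W' F"
  unfolding inV_def okE_def by (fastforce split: prod.splits)



lemma PP_slot:
  assumes "length ks = length xs + Suc (length ys)"
  shows "PP (xs @ f # ys) ks = PP xs (take (length xs) ks) * f (ks ! length xs) * PP ys (drop (Suc (length xs)) ks)"
proof -
  have e: "ks = take (length xs) ks @ ks ! length xs # drop (Suc (length xs)) ks"
    using assms by (simp add: id_take_nth_drop)
  have "PP (xs @ f # ys) (take (length xs) ks @ ks ! length xs # drop (Suc (length xs)) ks)
      = PP xs (take (length xs) ks) * PP (f # ys) (ks ! length xs # drop (Suc (length xs)) ks)"
    by (rule PP_append) (use assms in simp)
  then show ?thesis using e by (simp add: PP_Cons mult.assoc)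
qed

lemma PP_slot_cong:
  assumes "length ks = length xs + Suc (length ys)" "f (ks ! length xs) = f' (ks ! length xs)"
  shows "PP (xs @ f # ys) ks = PP (xs @ f' # ys) ks"
  using PP_slot[OF assms(1), of f] PP_slot[OF assms(1), of f'] assms(2) by simp

lemma PP_slot_scale:
  assumes "length ks = length xs + Suc (length ys)"
  shows "PP (xs @ (\<lambda>k. c * f k) # ys) ks = c * PP (xs @ f # ys) ks"
  using PP_slot[OF assms, of "\<lambda>k. c * f k"] PP_slot[OF assms, of f] by (simp add: algebra_simps)

lemma PP_slot_add:
  assumes "length ks = length xs + Suc (length ys)"
  shows "PP (xs @ (\<lambda>k. f k + g k) # ys) ks = PP (xs @ f # ys) ks + PP (xs @ g # ys) ks"
  using PP_slot[OF assms, of "\<lambda>k. f k + g k"] PP_slot[OF assms, of f] PP_slot[OF assms, of g]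
  by (simp add: algebra_simps)

lemma chains_len: "ks \<in> chains n \<Longrightarrow> length ks = n"
  by (simp add: mem_chains)

lemma chains_nth_ge1: "ks \<in> chains n \<Longrightarrow> i < n \<Longrightarrow> 1 \<le> ks ! i"
  using chains_ge1 nth_mem chains_len by metis

definition CS :: "(nat \<Rightarrow> complex) \<Rightarrow> (nat set \<times> (rat \<times> nat \<times> int) list) list \<Rightarrow> complex" where
  "CS z Fs = CSf (map (fac z) Fs)"

fun djl :: "nat set list \<Rightarrow> bool" where
  "djl [] = True"
| "djl (J # Js) = ((\<forall>K\<in>set Js. J \<inter> K = {}) \<and> djl Js)"

lemma djl_append: "djl (xs @ ys) \<longleftrightarrow> djl xs \<and> djl ys \<and> (\<forall>A\<in>set xs. \<forall>B\<in>set ys. A \<inter> B = {})"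
  by (induction xs) auto

definition Good :: "nat \<Rightarrow> nat \<Rightarrow> (nat set \<times> (rat \<times> nat \<times> int) list) list \<Rightarrow> bool" where
  "Good p W Fs \<longleftrightarrow> Jok p Fs \<and> djl (map fst Fs) \<and> sum_list (map (\<lambda>F. wt (snd F)) Fs) \<le> W \<and> length Fs \<le> p"

definition mu :: "(nat set \<times> (rat \<times> nat \<times> int) list) list \<Rightarrow> nat" where
  "mu Fs = sum_list (map (\<lambda>F. length (snd F) + length (filter (\<lambda>e. fst (snd e) \<noteq> 0) (snd F))) Fs)"

lemma mu_append: "mu (xs @ F # ys) = mu xs + (length (snd F) + length (filter (\<lambda>e. fst (snd e) \<noteq> 0) (snd F))) + mu ys"
  by (simp add: mu_def)

lemma Jok_slot:
  "Jok p (Xs @ (J, L) # Ys) \<longleftrightarrow> Jok p (Xs @ (J, L') # Ys)"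
  by (cases Xs) (auto simp: Jok_def)

lemma Good_slotL:
  assumes "Good p W (Xs @ (J, L) # Ys)" "wt L' \<le> wt L"
  shows "Good p W (Xs @ (J, L') # Ys)"
  using assms Jok_slot[of p Xs J L Ys L'] by (auto simp: Good_def)

lemma wt_Cons_le: "wt L \<le> wt (e # L)" "wt [e] \<le> wt (e # L)"
  by (auto simp: wt_def split: prod.splits)

lemma wt_single: "wt [(c, d, s)] = nat s"
  by (simp add: wt_def)

lemma wJ_nz: "Dom p z \<Longrightarrow> J \<subseteq> {..<p} \<Longrightarrow> wJ z J \<noteq> 0"
proof -
  assume D: "Dom p z" and J: "J \<subseteq> {..<p}"
  have "1 \<le> norm (\<Prod>j\<in>J. z j)" by (rule prod_norm_ge1[OF D J])
  then show ?thesis by (auto simp: wJ_def)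
qed

lemma wJ_union:
  assumes "finite A" "finite B" "A \<inter> B = {}"
  shows "wJ z (A \<union> B) = wJ z A * wJ z B"
  using assms by (simp add: wJ_def prod.union_disjoint)

lemma fac_Cons_split: "fac z (J, e # L) k = fac z (J, [e]) k + fac z (J, L) k"
  by (cases e) (simp add: fac_def Rv_Cons algebra_simps)

lemma fac_single: "fac z (J, [(c, d, s)]) k = wJ z J ^ k * (of_rat c * (of_nat (k + d)) powi (- s))"
  by (simp add: fac_def Rv_Cons)

lemma fac_Nil: "fac z (J, []) k = 0"
  by (simp add: fac_def)

lemma of_rat_powi: "(of_rat (r powi n) :: complex) = of_rat r powi n"
  by (cases "0 \<le> n") (simp_all add: power_int_def of_rat_power of_rat_inverse)

lemma fac_merge_B:
  assumes "1 \<le> m" "finite J" "finite J'" "J \<inter> J' = {}"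
  shows "fac z (J, [(c, 0, s)]) (m + t) * fac z (J', L') m = wJ z J powi int t * fac z (J \<union> J', prodL [(c, t, s)] L') m"
proof -
  have R: "Rv (prodL [(c, t, s)] L') m = of_rat c * (of_nat (m + t)) powi (- s) * Rv L' m"
    by (subst Rv_prodL[OF assms(1)]) (simp add: Rv_Cons)
  have W: "wJ z (J \<union> J') = wJ z J * wJ z J'" by (rule wJ_union) (use assms in auto)
  show ?thesis unfolding fac_def fst_conv snd_conv R W
    by (simp add: Rv_Cons power_add power_mult_distrib power_int_of_nat algebra_simps)
qed

lemma fac_merge_C:
  assumes "1 \<le> m" "finite J" "finite J'" "J \<inter> J' = {}"
  shows "fac z (J', L') m * fac z (J, [(c, 0, s)]) (m + t) = wJ z J powi int t * fac z (J' \<union> J, prodL L' [(c, t, s)]) m"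
proof -
  have R: "Rv (prodL L' [(c, t, s)]) m = Rv L' m * (of_rat c * (of_nat (m + t)) powi (- s))"
    by (subst Rv_prodL[OF assms(1)]) (simp add: Rv_Cons)
  have W: "wJ z (J' \<union> J) = wJ z J' * wJ z J" by (rule wJ_union) (use assms in auto)
  show ?thesis unfolding fac_def fst_conv snd_conv R W
    by (simp add: Rv_Cons power_add power_mult_distrib power_int_of_nat algebra_simps)
qed

lemma fac_shift:
  assumes "wJ z J \<noteq> 0"
  shows "fac z (J, [(c, d, s)]) k = wJ z J powi (- int d) * fac z (J, [(c, 0, s)]) (k + d)"
proof -
  have "wJ z J powi (- int d) * wJ z J ^ (k + d) = wJ z J ^ k"
    using assms by (simp add: power_add power_int_minus power_int_of_nat field_simps)
  then show ?thesis by (simp add: fac_single algebra_simps)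
qed

lemma CS_Nil: "CS z [] = 1"
proof -
  have "chains 0 = {[]}" by (auto simp: mem_chains)
  then show ?thesis by (simp add: CS_def CSf_def PP_Nil)
qed



lemma caseA: "CS z (Xs @ (J, []) # Ys) = 0"
proof -
  have "PP (map (fac z) (Xs @ (J, []) # Ys)) ks = 0" if "ks \<in> chains (length (Xs @ (J, []) # Ys))" for ks
    using PP_slot[of ks "map (fac z) Xs" "map (fac z) Ys" "fac z (J, [])"] chains_len[OF that] by (simp add: fac_Nil)
  then show ?thesis unfolding CS_def CSf_def by (simp add: infsum_0)
qed

lemma caseB:
  assumes D: "Dom p z" and J: "Jok p (Xs @ (J, e # L) # Ys)"
  shows "CS z (Xs @ (J, e # L) # Ys) = CS z (Xs @ (J, [e]) # Ys) + CS z (Xs @ (J, L) # Ys)"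
proof -
  define n where "n = length (Xs @ (J, e # L) # Ys)"
  have l1: "length (Xs @ (J, [e]) # Ys) = n" "length (Xs @ (J, L) # Ys) = n" by (simp_all add: n_def)
  have s1: "PP (map (fac z) (Xs @ (J, [e]) # Ys)) summable_on chains n"
    using summable_PP[OF D, of "Xs @ (J, [e]) # Ys"] J Jok_slot l1 by metis
  have s2: "PP (map (fac z) (Xs @ (J, L) # Ys)) summable_on chains n"
    using summable_PP[OF D, of "Xs @ (J, L) # Ys"] J Jok_slot l1 by metis
  have f: "fac z (J, e # L) = (\<lambda>k. fac z (J, [e]) k + fac z (J, L) k)" by (rule ext) (rule fac_Cons_split)
  have "PP (map (fac z) (Xs @ (J, e # L) # Ys)) ks = PP (map (fac z) (Xs @ (J, [e]) # Ys)) ks + PP (map (fac z) (Xs @ (J, L) # Ys)) ks"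
    if "ks \<in> chains n" for ks
    using PP_slot_add[of ks "map (fac z) Xs" "map (fac z) Ys" "fac z (J, [e])" "fac z (J, L)"] chains_len[OF that]
    by (simp add: f n_def)
  then have "CS z (Xs @ (J, e # L) # Ys) = infsum (\<lambda>ks. PP (map (fac z) (Xs @ (J, [e]) # Ys)) ks + PP (map (fac z) (Xs @ (J, L) # Ys)) ks) (chains n)"
    unfolding CS_def CSf_def n_def[symmetric] length_map by (rule infsum_cong)
  also have "\<dots> = CS z (Xs @ (J, [e]) # Ys) + CS z (Xs @ (J, L) # Ys)"
    unfolding CS_def CSf_def length_map l1 by (rule infsum_add[OF s1 s2])
  finally show ?thesis .
qed

lemma sum_lessThan_length: "(\<Sum>i<length xs. f (xs ! i)) = sum_list (map f xs)"
  by (induction xs) (simp_all add: sum.lessThan_Suc_shift del: sum.lessThan_Suc)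

lemma PP_single0:
  assumes "\<forall>F\<in>set Fs. \<exists>c s. snd F = [(c, 0, s)]" "length ks = length Fs"
  shows "PP (map (fac z) Fs) ks = of_rat (prod_list (map (\<lambda>F. fst (hd (snd F))) Fs)) *
     (\<Prod>i<length Fs. (wJ z (fst (Fs ! i))) ^ (ks ! i) / (of_nat (ks ! i)) powi (snd (snd (hd (snd (Fs ! i))))))"
  using assms
proof (induction Fs arbitrary: ks)
  case Nil then show ?case by (simp add: PP_Nil)
next
  case (Cons F Fs)
  obtain k ks' where ks: "ks = k # ks'" using Cons.prems by (cases ks) auto
  obtain c s where F: "snd F = [(c, 0, s)]" using Cons.prems by auto
  have IH: "PP (map (fac z) Fs) ks' = of_rat (prod_list (map (\<lambda>F. fst (hd (snd F))) Fs)) *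
     (\<Prod>i<length Fs. (wJ z (fst (Fs ! i))) ^ (ks' ! i) / (of_nat (ks' ! i)) powi (snd (snd (hd (snd (Fs ! i))))))"
    using Cons ks by auto
  have ff: "fac z F k = of_rat c * (wJ z (fst F) ^ k / (of_nat k) powi s)"
    using F by (simp add: fac_def Rv_Cons power_int_minus divide_inverse)
  show ?case unfolding ks
    by (simp add: PP_Cons IH ff prod.lessThan_Suc_shift F of_rat_mult algebra_simps del: prod.lessThan_Suc)
qed

lemma caseD:
  assumes G: "Good p W Fs" and S: "\<forall>F\<in>set Fs. \<exists>c s. snd F = [(c, 0, s)]"
  shows "inV p W (\<lambda>z. CS z Fs)"
proof -
  define ss where "ss = map (\<lambda>F. snd (snd (hd (snd F)))) Fs"
  define I where "I = map fst Fs"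
  define P where "P = prod_list (map (\<lambda>F. fst (hd (snd F))) Fs)"
  have len: "length ss = length Fs" by (simp add: ss_def)
  have CSe: "CS z Fs = of_rat P * La ss (map (wJ z) I)" for z
  proof -
    have "CS z Fs = infsum (\<lambda>ks. of_rat P * (\<Prod>i<length ss. (map (wJ z) I ! i) ^ (ks ! i) / (of_nat (ks ! i)) powi (ss ! i))) (chains (length ss))"
      unfolding CS_def CSf_def length_map len
    proof (rule infsum_cong)
      fix ks assume "ks \<in> chains (length Fs)"
      then have "length ks = length Fs" by (rule chains_len)
      then show "PP (map (fac z) Fs) ks = of_rat P * (\<Prod>i<length Fs. (map (wJ z) I ! i) ^ (ks ! i) / (of_nat (ks ! i)) powi (ss ! i))"
        by (simp add: PP_single0[OF S] P_def ss_def I_def)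
    qed
    also have "\<dots> = of_rat P * La ss (map (wJ z) I)"
      unfolding La_def by (simp add: infsum_cmult_right' ss_def I_def)
    finally show ?thesis .
  qed
  have ok: "okE p W ([], ss, I)"
  proof -
    have "(\<Sum>i<length ss. max (ss ! i) 0) = (\<Sum>i<length Fs. int (wt (snd (Fs ! i))))"
    proof (rule sum.cong)
      fix i assume "i \<in> {..<length Fs}"
      then have "Fs ! i \<in> set Fs" by simp
      then obtain c s where "snd (Fs ! i) = [(c, 0, s)]" using S by blast
      then show "max (ss ! i) 0 = int (wt (snd (Fs ! i)))" using \<open>i \<in> _\<close> by (simp add: ss_def wt_single)
    qed (simp add: ss_def)
    also have "\<dots> = sum_list (map (\<lambda>F. int (wt (snd F))) Fs)"
      by (rule sum_lessThan_length)
    also have "\<dots> = int (sum_list (map (\<lambda>F. wt (snd F)) Fs))"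
      by (induction Fs) auto
    also have "\<dots> \<le> int W" using G by (simp add: Good_def)
    finally have w: "(\<Sum>i<length ss. max (ss ! i) 0) \<le> int W" .
    have "\<forall>i<length ss. I ! i \<noteq> {} \<and> I ! i \<subseteq> {..<p}"
      using G by (auto simp: Good_def Jok_def ss_def I_def)
    then show ?thesis using w G by (simp add: okE_def ss_def I_def Good_def)
  qed
  show ?thesis
    by (rule inV_cong[OF inV_scale[OF inV_La[OF ok], of P]]) (simp add: CSe)
qed



lemma shift_CSf2:
  fixes xs ys :: "(nat \<Rightarrow> complex) list" and g :: "nat \<Rightarrow> complex" and d :: nat
  assumes a: "a = length xs" and n: "n = a + length ys"
  assumes s0: "PP (xs @ g # ys) summable_on chains (Suc n)"
    and sd: "PP (xs @ (\<lambda>k. g (k + d)) # ys) summable_on chains (Suc n)"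
    and sB: "\<And>t. t < d \<Longrightarrow> (\<lambda>ks. PP xs (take a ks) * g (lo a ks + t) * PP ys (drop a ks)) summable_on chains n"
    and sC: "\<And>t. 0 < a \<Longrightarrow> t \<in> {1..d} \<Longrightarrow> (\<lambda>ks. PP xs (take a ks) * g (ks ! (a - 1) + t) * PP ys (drop a ks)) summable_on chains n"
  shows "CSf (xs @ (\<lambda>k. g (k + d)) # ys) = CSf (xs @ g # ys)
          - (\<Sum>t<d. infsum (\<lambda>ks. PP xs (take a ks) * g (lo a ks + t) * PP ys (drop a ks)) (chains n))
          + (if a = 0 then 0 else (\<Sum>t\<in>{1..d}. infsum (\<lambda>ks. PP xs (take a ks) * g (ks ! (a - 1) + t) * PP ys (drop a ks)) (chains n)))"
  using shift_CSf[OF a n s0 sd] sB sC by simp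

definition Bv :: "(nat \<Rightarrow> complex) \<Rightarrow> (nat set \<times> (rat \<times> nat \<times> int) list) list \<Rightarrow> nat set \<Rightarrow> rat \<Rightarrow> int
   \<Rightarrow> (nat set \<times> (rat \<times> nat \<times> int) list) list \<Rightarrow> nat \<Rightarrow> complex" where
  "Bv z Xs J c s Ys t = (case Ys of [] \<Rightarrow> wJ z J powi int (1 + t) * of_rat (c * of_nat (1 + t) powi (- s)) * CS z Xs
     | Y # Ys' \<Rightarrow> wJ z J powi int t * CS z (Xs @ (J \<union> fst Y, prodL [(c, t, s)] (snd Y)) # Ys'))"

definition Cv :: "(nat \<Rightarrow> complex) \<Rightarrow> (nat set \<times> (rat \<times> nat \<times> int) list) list \<Rightarrow> nat set \<Rightarrow> rat \<Rightarrow> int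
   \<Rightarrow> (nat set \<times> (rat \<times> nat \<times> int) list) list \<Rightarrow> nat \<Rightarrow> complex" where
  "Cv z Xs J c s Ys t = wJ z J powi int t * CS z (butlast Xs @ (fst (last Xs) \<union> J, prodL (snd (last Xs)) [(c, t, s)]) # Ys)"

lemma B_point_cons:
  assumes ks: "ks \<in> chains (length Xs + Suc (length Ys'))" and fin: "finite J" "finite (fst Y)" and dj: "J \<inter> fst Y = {}"
  shows "PP (map (fac z) Xs) (take (length Xs) ks) * fac z (J, [(c, 0, s)]) (lo (length Xs) ks + t) * PP (map (fac z) (Y # Ys')) (drop (length Xs) ks)
     = wJ z J powi int t * PP (map (fac z) (Xs @ (J \<union> fst Y, prodL [(c, t, s)] (snd Y)) # Ys')) ks"
proof -
  have l: "length ks = length (map (fac z) Xs) + Suc (length (map (fac z) Ys'))" using chains_len[OF ks] by simp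
  have k1: "1 \<le> ks ! length Xs" using chains_nth_ge1[OF ks] by simp
  have "PP (map (fac z) Xs) (take (length Xs) ks) * fac z (J, [(c, 0, s)]) (lo (length Xs) ks + t) * PP (map (fac z) (Y # Ys')) (drop (length Xs) ks)
      = PP (map (fac z) Xs @ (\<lambda>m. fac z (J, [(c, 0, s)]) (m + t) * fac z Y m) # map (fac z) Ys') ks"
    using Phi_B_cons[of ks "map (fac z) Xs" "map (fac z) Ys'" "fac z (J, [(c, 0, s)])" t "fac z Y"] ks by simp
  also have "\<dots> = PP (map (fac z) Xs @ (\<lambda>m. wJ z J powi int t * fac z (J \<union> fst Y, prodL [(c, t, s)] (snd Y)) m) # map (fac z) Ys') ks"
  proof (rule PP_slot_cong[OF l])
    show "fac z (J, [(c, 0, s)]) (ks ! length (map (fac z) Xs) + t) * fac z Y (ks ! length (map (fac z) Xs))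
        = wJ z J powi int t * fac z (J \<union> fst Y, prodL [(c, t, s)] (snd Y)) (ks ! length (map (fac z) Xs))"
      using fac_merge_B[OF k1 fin dj, of z c s t "snd Y"] by simp
  qed
  also have "\<dots> = wJ z J powi int t * PP (map (fac z) (Xs @ (J \<union> fst Y, prodL [(c, t, s)] (snd Y)) # Ys')) ks"
    using PP_slot_scale[OF l] by simp
  finally show ?thesis .
qed

lemma C_point:
  assumes ks: "ks \<in> chains (length Xs + length Ys)" and ne: "Xs \<noteq> []"
    and fin: "finite J" "finite (fst (last Xs))" and dj: "J \<inter> fst (last Xs) = {}"
  shows "PP (map (fac z) Xs) (take (length Xs) ks) * fac z (J, [(c, 0, s)]) (ks ! (length Xs - 1) + t) * PP (map (fac z) Ys) (drop (length Xs) ks)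
     = wJ z J powi int t * PP (map (fac z) (butlast Xs @ (fst (last Xs) \<union> J, prodL (snd (last Xs)) [(c, t, s)]) # Ys)) ks"
proof -
  have lb: "length (butlast Xs) = length Xs - 1" by simp
  have l: "length ks = length (map (fac z) (butlast Xs)) + Suc (length (map (fac z) Ys))" using chains_len[OF ks] ne by (cases Xs) auto
  have k1: "1 \<le> ks ! (length Xs - 1)" using chains_nth_ge1[OF ks] ne by (cases Xs) auto
  have "PP (map (fac z) Xs) (take (length Xs) ks) * fac z (J, [(c, 0, s)]) (ks ! (length Xs - 1) + t) * PP (map (fac z) Ys) (drop (length Xs) ks)
      = PP (butlast (map (fac z) Xs) @ (\<lambda>m. last (map (fac z) Xs) m * fac z (J, [(c, 0, s)]) (m + t)) # map (fac z) Ys) ks"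
    using Phi_C[of ks "map (fac z) Xs" "map (fac z) Ys" "fac z (J, [(c, 0, s)])" t] ks ne by simp
  also have "\<dots> = PP (map (fac z) (butlast Xs) @ (\<lambda>m. fac z (last Xs) m * fac z (J, [(c, 0, s)]) (m + t)) # map (fac z) Ys) ks"
    using ne by (simp add: map_butlast last_map)
  also have "\<dots> = PP (map (fac z) (butlast Xs) @ (\<lambda>m. wJ z J powi int t * fac z (fst (last Xs) \<union> J, prodL (snd (last Xs)) [(c, t, s)]) m) # map (fac z) Ys) ks"
  proof (rule PP_slot_cong[OF l])
    have e: "fac z (last Xs) = fac z (fst (last Xs), snd (last Xs))" by simp
    show "fac z (last Xs) (ks ! length (map (fac z) (butlast Xs))) * fac z (J, [(c, 0, s)]) (ks ! length (map (fac z) (butlast Xs)) + t)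
        = wJ z J powi int t * fac z (fst (last Xs) \<union> J, prodL (snd (last Xs)) [(c, t, s)]) (ks ! length (map (fac z) (butlast Xs)))"
      unfolding e length_map lb using fac_merge_C[OF k1 fin(1) fin(2) dj, of z "snd (last Xs)" c s t] by simp
  qed
  also have "\<dots> = wJ z J powi int t * PP (map (fac z) (butlast Xs @ (fst (last Xs) \<union> J, prodL (snd (last Xs)) [(c, t, s)]) # Ys)) ks"
    using PP_slot_scale[OF l] by simp
  finally show ?thesis .
qed

lemma summable_on_cong': "f summable_on A \<Longrightarrow> (\<And>x. x \<in> A \<Longrightarrow> f x = g x) \<Longrightarrow> g summable_on A"
  using summable_on_cong by metis

lemma Jok_prefix: "Jok p (Xs @ Ys) \<Longrightarrow> Jok p Xs"
  by (cases Xs) (auto simp: Jok_def)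

lemma Jok_mergeB: "Jok p (Xs @ (J, L) # Y # Ys') \<Longrightarrow> Jok p (Xs @ (J \<union> fst Y, L') # Ys')"
  by (cases Xs) (auto simp: Jok_def)

lemma Jok_mergeC:
  assumes "Xs \<noteq> []" "Jok p (Xs @ (J, L) # Ys)"
  shows "Jok p (butlast Xs @ (fst (last Xs) \<union> J, L') # Ys)"
proof -
  obtain Xs0 X where X: "Xs = Xs0 @ [X]" using assms(1) by (cases Xs rule: rev_exhaust) auto
  show ?thesis using assms(2) unfolding X by (cases Xs0) (auto simp: Jok_def)
qed

lemma dj_B: "djl (map fst (Xs @ (J, L) # Y # Ys')) \<Longrightarrow> J \<inter> fst Y = {}"
  by (simp add: djl_append)

lemma dj_C: "Xs \<noteq> [] \<Longrightarrow> djl (map fst (Xs @ (J, L) # Ys)) \<Longrightarrow> J \<inter> fst (last Xs) = {}"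
  by (auto simp: djl_append)

lemma caseC_id:
  assumes D: "Dom p z" and G: "Good p W (Xs @ (J, [(c, d, s)]) # Ys)"
  shows "CS z (Xs @ (J, [(c, d, s)]) # Ys) = wJ z J powi (- int d) * (CS z (Xs @ (J, [(c, 0, s)]) # Ys)
      - (\<Sum>t<d. Bv z Xs J c s Ys t) + (if Xs = [] then 0 else (\<Sum>t\<in>{1..d}. Cv z Xs J c s Ys t)))"
proof -
  define Fs where "Fs = Xs @ (J, [(c, d, s)]) # Ys"
  define Fs' where "Fs' = Xs @ (J, [(c, 0, s)]) # Ys"
  define xs where "xs = map (fac z) Xs"
  define ys where "ys = map (fac z) Ys"
  define g where "g = fac z (J, [(c, 0, s)])"
  define a where "a = length Xs"
  define n where "n = length Xs + length Ys"
  define w where "w = wJ z J"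
  define C where "C = w powi (- int d)"
  have JF: "Jok p Fs" "djl (map fst Fs)" using G by (simp_all add: Good_def Fs_def)
  have Jsub: "J \<subseteq> {..<p}" using JF(1) by (auto simp: Jok_def Fs_def)
  have finJ: "finite J" using Jsub finite_subset by blast
  have w0: "w \<noteq> 0" using wJ_nz[OF D Jsub] by (simp add: w_def)
  have C0: "C \<noteq> 0" using w0 by (simp add: C_def)
  have JF': "Jok p Fs'" using JF(1) Jok_slot unfolding Fs_def Fs'_def by blast
  have fe: "fac z (J, [(c, d, s)]) = (\<lambda>k. C * g (k + d))"
    by (rule ext) (use fac_shift[of z J c d s] w0 in \<open>simp add: C_def g_def w_def\<close>)
  have mF: "map (fac z) Fs = xs @ (\<lambda>k. C * g (k + d)) # ys" by (simp add: Fs_def xs_def ys_def fe)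
  have mF': "map (fac z) Fs' = xs @ g # ys" by (simp add: Fs'_def xs_def ys_def g_def)
  have lF: "length Fs = Suc n" "length Fs' = Suc n" by (simp_all add: Fs_def Fs'_def n_def)
  have la: "a = length xs" "n = a + length ys" by (simp_all add: a_def xs_def n_def ys_def)
  have sF: "PP (xs @ (\<lambda>k. C * g (k + d)) # ys) summable_on chains (Suc n)"
    using summable_PP[OF D JF(1)] mF lF by simp
  have eqsc: "PP (xs @ (\<lambda>k. C * g (k + d)) # ys) ks = C * PP (xs @ (\<lambda>k. g (k + d)) # ys) ks"
    if "ks \<in> chains (Suc n)" for ks
    by (rule PP_slot_scale) (use chains_len[OF that] la in simp)
  have "(\<lambda>ks. C * PP (xs @ (\<lambda>k. g (k + d)) # ys) ks) summable_on chains (Suc n)"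
    by (rule summable_on_cong'[OF sF eqsc])
  then have sd: "PP (xs @ (\<lambda>k. g (k + d)) # ys) summable_on chains (Suc n)"
    using summable_on_cmult_right'[OF C0] by blast
  have s0: "PP (xs @ g # ys) summable_on chains (Suc n)" using summable_PP[OF D JF'] mF' lF by simp
  have CSeq: "CS z Fs = C * CSf (xs @ (\<lambda>k. g (k + d)) # ys)"
  proof -
    have "CS z Fs = infsum (\<lambda>ks. C * PP (xs @ (\<lambda>k. g (k + d)) # ys) ks) (chains (Suc n))"
      unfolding CS_def CSf_def mF[symmetric] length_map lF by (rule infsum_cong) (simp add: mF eqsc)
    also have "\<dots> = C * CSf (xs @ (\<lambda>k. g (k + d)) # ys)"
      unfolding CSf_def using la by (simp add: infsum_cmult_right')
    finally show ?thesis .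
  qed
  define bt where "bt t ks = PP xs (take a ks) * g (lo a ks + t) * PP ys (drop a ks)" for t ks
  define ct where "ct t ks = PP xs (take a ks) * g (ks ! (a - 1) + t) * PP ys (drop a ks)" for t ks
  have Bf: "bt t summable_on chains n \<and> infsum (bt t) (chains n) = Bv z Xs J c s Ys t" for t
  proof (cases Ys)
    case Nil
    have na: "n = length Xs" by (simp add: n_def Nil)
    have JX: "Jok p Xs" using JF(1) unfolding Fs_def by (rule Jok_prefix)
    have g1: "g (1 + t) = w powi int (1 + t) * of_rat (c * of_nat (1 + t) powi (- s))"
      unfolding g_def fac_single w_def power_int_of_nat of_rat_mult of_rat_powi of_rat_of_nat_eq by simp
    have pt: "bt t ks = g (1 + t) * PP (map (fac z) Xs) ks" if "ks \<in> chains n" for ks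
      using Phi_B_nil[of ks xs g t] that by (simp add: bt_def a_def xs_def ys_def Nil na)
    have sX: "PP (map (fac z) Xs) summable_on chains n" using summable_PP[OF D JX] na by simp
    have "bt t summable_on chains n"
      by (rule summable_on_cong'[OF summable_on_cmult_right[OF sX, of "g (1 + t)"] pt[symmetric]])
    moreover have "infsum (bt t) (chains n) = Bv z Xs J c s Ys t"
    proof -
      have "infsum (bt t) (chains n) = infsum (\<lambda>ks. g (1 + t) * PP (map (fac z) Xs) ks) (chains n)"
        by (rule infsum_cong) (rule pt)
      also have "\<dots> = g (1 + t) * CS z Xs" by (simp add: infsum_cmult_right' CS_def CSf_def na)
      finally show ?thesis using g1 by (simp add: Bv_def Nil w_def)
    qed
    ultimately show ?thesis by blast
  next
    case (Cons Y Ys')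
    define FB where "FB = Xs @ (J \<union> fst Y, prodL [(c, t, s)] (snd Y)) # Ys'"
    have lB: "length FB = n" by (simp add: FB_def n_def Cons)
    have JB: "Jok p FB" using JF(1) unfolding Fs_def FB_def Cons by (rule Jok_mergeB)
    have finY: "finite (fst Y)" using JF(1) finite_subset by (auto simp: Jok_def Fs_def Cons)
    have djY: "J \<inter> fst Y = {}" using JF(2) unfolding Fs_def Cons by (rule dj_B)
    have pt: "bt t ks = w powi int t * PP (map (fac z) FB) ks" if "ks \<in> chains n" for ks
      using B_point_cons[of ks Xs Ys' J Y z c s t] that finJ finY djY
      by (simp add: bt_def a_def xs_def ys_def Cons FB_def w_def g_def n_def)
    have sB: "PP (map (fac z) FB) summable_on chains n" using summable_PP[OF D JB] lB by simp
    have "bt t summable_on chains n"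
      by (rule summable_on_cong'[OF summable_on_cmult_right[OF sB, of "w powi int t"] pt[symmetric]])
    moreover have "infsum (bt t) (chains n) = Bv z Xs J c s Ys t"
    proof -
      have "infsum (bt t) (chains n) = infsum (\<lambda>ks. w powi int t * PP (map (fac z) FB) ks) (chains n)"
        by (rule infsum_cong) (rule pt)
      also have "\<dots> = w powi int t * CS z FB" by (simp add: infsum_cmult_right' CS_def CSf_def lB)
      finally show ?thesis by (simp add: Bv_def Cons FB_def w_def)
    qed
    ultimately show ?thesis by blast
  qed
  have Cf: "ct t summable_on chains n \<and> infsum (ct t) (chains n) = Cv z Xs J c s Ys t" if ne: "Xs \<noteq> []" for t
  proof -
    define FC where "FC = butlast Xs @ (fst (last Xs) \<union> J, prodL (snd (last Xs)) [(c, t, s)]) # Ys"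
    have lC: "length FC = n" using ne by (simp add: FC_def n_def)
    have JC: "Jok p FC" using JF(1) unfolding Fs_def FC_def by (rule Jok_mergeC[OF ne])
    have "last Xs \<in> set Xs" using ne by simp
    then have "fst (last Xs) \<subseteq> {..<p}" using JF(1) by (auto simp: Jok_def Fs_def)
    then have finX: "finite (fst (last Xs))" using finite_subset by blast
    have djX: "J \<inter> fst (last Xs) = {}" using JF(2) unfolding Fs_def by (rule dj_C[OF ne])
    have pt: "ct t ks = w powi int t * PP (map (fac z) FC) ks" if "ks \<in> chains n" for ks
      using C_point[of ks Xs Ys J z c s t] that ne finJ finX djX
      by (simp add: ct_def a_def xs_def ys_def FC_def w_def g_def n_def)
    have sC: "PP (map (fac z) FC) summable_on chains n" using summable_PP[OF D JC] lC by simp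
    have "ct t summable_on chains n"
      by (rule summable_on_cong'[OF summable_on_cmult_right[OF sC, of "w powi int t"] pt[symmetric]])
    moreover have "infsum (ct t) (chains n) = Cv z Xs J c s Ys t"
    proof -
      have "infsum (ct t) (chains n) = infsum (\<lambda>ks. w powi int t * PP (map (fac z) FC) ks) (chains n)"
        by (rule infsum_cong) (rule pt)
      also have "\<dots> = w powi int t * CS z FC" by (simp add: infsum_cmult_right' CS_def CSf_def lC)
      finally show ?thesis by (simp add: Cv_def FC_def w_def)
    qed
    ultimately show ?thesis by blast
  qed
  have sB: "\<And>t. t < d \<Longrightarrow> bt t summable_on chains n" using Bf by blast
  have sC: "\<And>t. 0 < a \<Longrightarrow> t \<in> {1..d} \<Longrightarrow> ct t summable_on chains n" using Cf by (auto simp: a_def)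
  have sh: "CSf (xs @ (\<lambda>k. g (k + d)) # ys) = CSf (xs @ g # ys)
          - (\<Sum>t<d. infsum (bt t) (chains n))
          + (if a = 0 then 0 else (\<Sum>t\<in>{1..d}. infsum (ct t) (chains n)))"
    using shift_CSf2[OF la s0 sd] sB sC unfolding bt_def ct_def by simp
  have e1: "(\<Sum>t<d. infsum (bt t) (chains n)) = (\<Sum>t<d. Bv z Xs J c s Ys t)" using Bf by simp
  have e2: "(if a = 0 then 0 else (\<Sum>t\<in>{1..d}. infsum (ct t) (chains n)))
          = (if Xs = [] then 0 else (\<Sum>t\<in>{1..d}. Cv z Xs J c s Ys t))" using Cf by (simp add: a_def)
  have e3: "CSf (xs @ g # ys) = CS z Fs'" by (simp add: CS_def mF')
  show ?thesis
    unfolding Fs_def[symmetric] Fs'_def[symmetric] CSeq sh e1 e2 e3 C_def w_def ..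
qed



lemma wsum_append: "sum_list (map (\<lambda>F. wt (snd F)) (Xs @ F # Ys)) = sum_list (map (\<lambda>F. wt (snd F)) Xs) + wt (snd F) + sum_list (map (\<lambda>F. wt (snd F)) Ys)"
  by simp

lemma Good_prefix: "Good p W (Xs @ Ys) \<Longrightarrow> Good p W Xs"
  unfolding Good_def using Jok_prefix by (auto simp: djl_append)

lemma Good_mergeB:
  assumes "Good p W (Xs @ (J, [(c, d, s)]) # Y # Ys')"
  shows "Good p W (Xs @ (J \<union> fst Y, prodL [(c, t, s)] (snd Y)) # Ys')"
proof -
  have w: "wt (prodL [(c, t, s)] (snd Y)) \<le> wt [(c, d, s)] + wt (snd Y)"
    using wt_prodL[of "[(c, t, s)]" "snd Y"] by (simp add: wt_single)
  show ?thesis using assms Jok_mergeB[of p Xs J "[(c, d, s)]" Y Ys'] w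
    unfolding Good_def by (auto simp: djl_append)
qed

lemma Good_mergeC:
  assumes "Xs \<noteq> []" "Good p W (Xs @ (J, [(c, d, s)]) # Ys)"
  shows "Good p W (butlast Xs @ (fst (last Xs) \<union> J, prodL (snd (last Xs)) [(c, t, s)]) # Ys)"
proof -
  obtain Xs0 X where X: "Xs = Xs0 @ [X]" using assms(1) by (cases Xs rule: rev_exhaust) auto
  have w: "wt (prodL (snd X) [(c, t, s)]) \<le> wt (snd X) + wt [(c, d, s)]"
    using wt_prodL[of "snd X" "[(c, t, s)]"] by (simp add: wt_single)
  have J: "Jok p (Xs0 @ (fst X \<union> J, prodL (snd X) [(c, t, s)]) # Ys)"
    using Jok_mergeC[OF assms(1), of p J "[(c, d, s)]" Ys "prodL (snd X) [(c, t, s)]"] assms(2)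
    by (simp add: Good_def X)
  show ?thesis using assms(2) J w unfolding Good_def X by (auto simp: djl_append)
qed

lemma main:
  assumes "Good p W Fs"
  shows "inV p W (\<lambda>z. CS z Fs)"
  using assms
proof (induction "length Fs" arbitrary: Fs rule: less_induct)
  case less
  have IHlen: "inV p W (\<lambda>z. CS z Gs)" if "length Gs < length Fs" "Good p W Gs" for Gs
    using less.hyps that by blast
  have "\<And>Gs. mu Gs = m \<Longrightarrow> length Gs = length Fs \<Longrightarrow> Good p W Gs \<Longrightarrow> inV p W (\<lambda>z. CS z Gs)" for m
  proof (induction m rule: less_induct)
    case (less m Gs)
    have IHmu: "inV p W (\<lambda>z. CS z Hs)" if "mu Hs < mu Gs" "length Hs = length Fs" "Good p W Hs" for Hs
      using less.IH less.prems(1) that by blast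
    have G: "Good p W Gs" using less.prems by blast
    have lG: "length Gs = length Fs" using less.prems by blast
    have Jk: "Jok p Gs" using G by (simp add: Good_def)
    show ?case
    proof (cases "\<exists>F\<in>set Gs. snd F = []")
      case True
      then obtain Xs F Ys where Gs: "Gs = Xs @ F # Ys" and F: "snd F = []" by (rule split_list_propE)
      have "CS z Gs = 0" for z using caseA[of z Xs "fst F" Ys] F Gs by (metis prod.collapse)
      then show ?thesis using inV_zero inV_cong by metis
    next
      case A: False
      show ?thesis
      proof (cases "\<exists>F\<in>set Gs. 2 \<le> length (snd F)")
        case True
        then obtain Xs F Ys where Gs: "Gs = Xs @ F # Ys" and F: "2 \<le> length (snd F)" by (rule split_list_propE)
        obtain e L where eL: "snd F = e # L" "L \<noteq> []" using F by (cases "snd F") (auto, cases "tl (snd F)", auto)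
        define J where "J = fst F"
        have Gs': "Gs = Xs @ (J, e # L) # Ys" using Gs eL by (metis J_def prod.collapse)
        have G1: "Good p W (Xs @ (J, [e]) # Ys)" using Good_slotL[of p W Xs J "e # L" Ys "[e]"] G Gs' wt_Cons_le by simp
        have G2: "Good p W (Xs @ (J, L) # Ys)" using Good_slotL[of p W Xs J "e # L" Ys L] G Gs' wt_Cons_le by simp
        have m1: "mu (Xs @ (J, [e]) # Ys) < mu Gs" using eL unfolding Gs' mu_append by (cases L) auto
        have m2: "mu (Xs @ (J, L) # Ys) < mu Gs" unfolding Gs' mu_append by auto
        have I1: "inV p W (\<lambda>z. CS z (Xs @ (J, [e]) # Ys))" by (rule IHmu[OF m1 _ G1]) (simp add: lG[symmetric] Gs')
        have I2: "inV p W (\<lambda>z. CS z (Xs @ (J, L) # Ys))" by (rule IHmu[OF m2 _ G2]) (simp add: lG[symmetric] Gs')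
        show ?thesis
        proof (rule inV_cong[OF inV_add[OF I1 I2]])
          fix z assume D: "Dom p z"
          show "CS z (Xs @ (J, [e]) # Ys) + CS z (Xs @ (J, L) # Ys) = CS z Gs"
            using caseB[OF D, of Xs J e L Ys] Jk Gs' by simp
        qed
      next
        case B: False
        have single: "\<forall>F\<in>set Gs. \<exists>c d s. snd F = [(c, d, s)]"
        proof
          fix F assume "F \<in> set Gs"
          then have "snd F \<noteq> []" "length (snd F) < 2" using A B by auto
          then obtain e where "snd F = [e]" by (cases "snd F") auto
          then show "\<exists>c d s. snd F = [(c, d, s)]" by (cases e) auto
        qed
        show ?thesis
        proof (cases "\<exists>F\<in>set Gs. fst (snd (hd (snd F))) \<noteq> 0")
          case True
          then obtain Xs F Ys where Gs: "Gs = Xs @ F # Ys" and F: "fst (snd (hd (snd F))) \<noteq> 0" by (rule split_list_propE)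
          obtain c d s where cds: "snd F = [(c, d, s)]" using single Gs by auto
          define J where "J = fst F"
          have Gs': "Gs = Xs @ (J, [(c, d, s)]) # Ys" using Gs cds by (metis J_def prod.collapse)
          have d0: "d \<noteq> 0" using F cds by simp
          have Jsub: "J \<subseteq> {..<p}" using Jk by (auto simp: Jok_def Gs')
          define Fs' where "Fs' = Xs @ (J, [(c, 0, s)]) # Ys"
          have G': "Good p W Fs'" using Good_slotL[of p W Xs J "[(c, d, s)]" Ys "[(c, 0, s)]"] G Gs'
            by (simp add: wt_single Fs'_def)
          have m': "mu Fs' < mu Gs" using d0 unfolding Gs' Fs'_def mu_append by simp
          have I0: "inV p W (\<lambda>z. CS z Fs')" by (rule IHmu[OF m' _ G']) (simp add: lG[symmetric] Gs' Fs'_def)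
          have IB: "inV p W (\<lambda>z. Bv z Xs J c s Ys t)" for t
          proof (cases Ys)
            case Nil
            have GX: "Good p W Xs" using G Gs' Good_prefix by blast
            have lX: "length Xs < length Fs" using lG Gs' by simp
            have "inV p W (\<lambda>z. wJ z J powi int (1 + t) * (of_rat (c * of_nat (1 + t) powi (- s)) * CS z Xs))"
              by (rule inV_wmul[OF inV_scale[OF IHlen[OF lX GX]] Jsub])
            then show ?thesis by (rule inV_cong) (simp add: Bv_def Nil mult.assoc)
          next
            case (Cons Y Ys')
            have GB: "Good p W (Xs @ (J \<union> fst Y, prodL [(c, t, s)] (snd Y)) # Ys')"
              using Good_mergeB[of p W Xs J c d s Y Ys' t] G Gs' Cons by simp
            have lB: "length (Xs @ (J \<union> fst Y, prodL [(c, t, s)] (snd Y)) # Ys') < length Fs" using lG Gs' Cons by simp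
            have "inV p W (\<lambda>z. wJ z J powi int t * CS z (Xs @ (J \<union> fst Y, prodL [(c, t, s)] (snd Y)) # Ys'))"
              by (rule inV_wmul[OF IHlen[OF lB GB] Jsub])
            then show ?thesis by (rule inV_cong) (simp add: Bv_def Cons)
          qed
          have IC: "inV p W (\<lambda>z. Cv z Xs J c s Ys t)" if ne: "Xs \<noteq> []" for t
          proof -
            have GC: "Good p W (butlast Xs @ (fst (last Xs) \<union> J, prodL (snd (last Xs)) [(c, t, s)]) # Ys)"
              using Good_mergeC[OF ne, of p W J c d s Ys t] G Gs' by simp
            have lC: "length (butlast Xs @ (fst (last Xs) \<union> J, prodL (snd (last Xs)) [(c, t, s)]) # Ys) < length Fs"
              using lG Gs' ne by (cases Xs) auto
            have "inV p W (\<lambda>z. wJ z J powi int t * CS z (butlast Xs @ (fst (last Xs) \<union> J, prodL (snd (last Xs)) [(c, t, s)]) # Ys))"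
              by (rule inV_wmul[OF IHlen[OF lC GC] Jsub])
            then show ?thesis by (rule inV_cong) (simp add: Cv_def)
          qed
          have ICC: "inV p W (\<lambda>z. if Xs = [] then 0 else (\<Sum>t\<in>{1..d}. Cv z Xs J c s Ys t))"
          proof (cases "Xs = []")
            case True then show ?thesis by (simp add: inV_zero)
          next
            case False then show ?thesis using inV_sum[of "{1..d}" p W "\<lambda>t z. Cv z Xs J c s Ys t"] IC by simp
          qed
          have Iall: "inV p W (\<lambda>z. wJ z J powi (- int d) * (CS z Fs' - (\<Sum>t<d. Bv z Xs J c s Ys t)
              + (if Xs = [] then 0 else (\<Sum>t\<in>{1..d}. Cv z Xs J c s Ys t))))"
            by (rule inV_wmul[OF inV_add[OF inV_diff[OF I0 inV_sum[OF _ IB]] ICC] Jsub]) simp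
          show ?thesis
          proof (rule inV_cong[OF Iall])
            fix z assume D: "Dom p z"
            show "wJ z J powi (- int d) * (CS z Fs' - (\<Sum>t<d. Bv z Xs J c s Ys t)
              + (if Xs = [] then 0 else (\<Sum>t\<in>{1..d}. Cv z Xs J c s Ys t))) = CS z Gs"
              using caseC_id[OF D, of W Xs J c d s Ys] G Gs' by (simp add: Fs'_def)
          qed
        next
          case False
          have "\<forall>F\<in>set Gs. \<exists>c s. snd F = [(c, 0, s)]"
          proof
            fix F assume F: "F \<in> set Gs"
            then obtain c d s where "snd F = [(c, d, s)]" using single by blast
            moreover have "fst (snd (hd (snd F))) = 0" using False F by blast
            ultimately show "\<exists>c s. snd F = [(c, 0, s)]" by auto
          qed
          then show ?thesis by (rule caseD[OF G])
        qed
      qed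
    qed
  qed
  then show ?case using less.prems by blast
qed



lemma set_prodLE:
  assumes "(c0, e, t) \<in> set (prodL L L')"
  obtains c d s c' d' s' where "(c, d, s) \<in> set L" "(c', d', s') \<in> set L'" "e \<in> {d, d'}"
    "t \<le> (if d = d' then s + s' else max s s')"
  using set_prodL[OF assms] by (elim exE conjE) (rule that; assumption)

lemma poch_part:
  "\<exists>L. (\<forall>k. 1 \<le> k \<longrightarrow> Rv L k = (\<Prod>i<Suc n. (of_nat (k + i) :: complex) powi (- int A)))
      \<and> (\<forall>(c, d, s)\<in>set L. d \<le> n \<and> s \<le> int A)"
proof (induction n)
  case 0
  show ?case by (intro exI[of _ "[(1, 0, int A)]"]) (simp add: Rv_Cons)
next
  case (Suc n)
  obtain L where L: "\<forall>k. 1 \<le> k \<longrightarrow> Rv L k = (\<Prod>i<Suc n. (of_nat (k + i) :: complex) powi (- int A))"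
    "\<forall>(c, d, s)\<in>set L. d \<le> n \<and> s \<le> int A" using Suc by blast
  define L' where "L' = prodL L [(1, Suc n, int A)]"
  have "Rv L' k = (\<Prod>i<Suc (Suc n). (of_nat (k + i) :: complex) powi (- int A))" if "1 \<le> k" for k
    unfolding L'_def Rv_prodL[OF that] using L(1) that by (simp add: Rv_Cons add_ac)
  moreover have "\<forall>(c, d, s)\<in>set L'. d \<le> Suc n \<and> s \<le> int A"
  proof (clarify)
    fix c e t assume h0: "(c, e, t) \<in> set L'"
    have "(c, e, t) \<in> set (prodL L [(1, Suc n, int A)])" using h0 unfolding L'_def .
    then have ex: "\<exists>c0 d s c' d' s'. (c0, d, s) \<in> set L \<and> (c', d', s') \<in> set [(1::rat, Suc n, int A)] \<and> e \<in> {d, d'} \<and> t \<le> (if d = d' then s + s' else max s s')"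
      by (rule set_prodL)
    show "e \<le> Suc n \<and> t \<le> int A" using ex L(2) by (fastforce split: if_splits)
  qed
  ultimately show ?case by blast
qed

lemma poch_L:
  "\<exists>L. (\<forall>k. 1 \<le> k \<longrightarrow> Rv L k = (of_nat k :: complex) ^ e * (\<Prod>i<Suc n. (of_nat (k + i) :: complex) powi (- int A)))
      \<and> wt L \<le> A"
proof -
  obtain L where L: "\<forall>k. 1 \<le> k \<longrightarrow> Rv L k = (\<Prod>i<Suc n. (of_nat (k + i) :: complex) powi (- int A))"
    "\<forall>(c, d, s)\<in>set L. d \<le> n \<and> s \<le> int A" using poch_part by blast
  define L' where "L' = prodL [(1, 0, - int e)] L"
  have "Rv L' k = (of_nat k :: complex) ^ e * (\<Prod>i<Suc n. (of_nat (k + i) :: complex) powi (- int A))" if "1 \<le> k" for k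
    unfolding L'_def Rv_prodL[OF that] using L(1) that by (simp add: Rv_Cons power_int_of_nat)
  moreover have "wt L' \<le> A"
  proof (rule wt_le)
    fix c e' t assume h0: "(c, e', t) \<in> set L'"
    have "(c, e', t) \<in> set (prodL [(1, 0, - int e)] L)" using h0 unfolding L'_def .
    then have ex: "\<exists>c0 d s c' d' s'. (c0, d, s) \<in> set [(1::rat, 0, - int e)] \<and> (c', d', s') \<in> set L \<and> e' \<in> {d, d'} \<and> t \<le> (if d = d' then s + s' else max s s')"
      by (rule set_prodL)
    show "t \<le> int A" using ex L(2) by (fastforce split: if_splits)
  qed
  ultimately show ?thesis by blast
qed

definition LL :: "nat \<Rightarrow> nat \<Rightarrow> nat \<Rightarrow> (rat \<times> nat \<times> int) list" where
  "LL e n A = (SOME L. (\<forall>k. 1 \<le> k \<longrightarrow> Rv L k = (of_nat k :: complex) ^ e * (\<Prod>i<Suc n. (of_nat (k + i) :: complex) powi (- int A)))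
      \<and> wt L \<le> A)"

lemma LL_spec: "(\<forall>k. 1 \<le> k \<longrightarrow> Rv (LL e n A) k = (of_nat k :: complex) ^ e * (\<Prod>i<Suc n. (of_nat (k + i) :: complex) powi (- int A)))
      \<and> wt (LL e n A) \<le> A"
  unfolding LL_def by (rule someI_ex[OF poch_L])

lemma LL: "1 \<le> k \<Longrightarrow> Rv (LL e n A) k = (of_nat k :: complex) ^ e * (\<Prod>i<Suc n. (of_nat (k + i) :: complex) powi (- int A))"
  "wt (LL e n A) \<le> A"
  by (rule LL_spec[THEN conjunct1, rule_format], assumption) (rule LL_spec[THEN conjunct2])

definition Fsd :: "nat \<Rightarrow> (nat \<Rightarrow> nat) \<Rightarrow> (nat \<Rightarrow> nat) \<Rightarrow> (nat \<Rightarrow> nat) \<Rightarrow> (nat set \<times> (rat \<times> nat \<times> int) list) list" where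
  "Fsd p A n e = map (\<lambda>j. ({j}, LL (e j) (n j) (A j))) [0..<p]"

lemma djl_sing: "distinct xs \<Longrightarrow> djl (map (\<lambda>j. {j}) xs)"
  by (induction xs) auto

lemma Good_Fsd: assumes "1 \<le> p" shows "Good p (\<Sum>j<p. A j) (Fsd p A n e)"
proof -
  have J: "Jok p (Fsd p A n e)" using assms by (auto simp: Jok_def Fsd_def hd_map)
  have d: "djl (map fst (Fsd p A n e))" by (simp add: Fsd_def comp_def djl_sing)
  have "sum_list (map (\<lambda>F. wt (snd F)) (Fsd p A n e)) = (\<Sum>j<p. wt (LL (e j) (n j) (A j)))"
    by (simp add: Fsd_def comp_def interv_sum_list_conv_sum_set_nat atLeast0LessThan)
  also have "\<dots> \<le> (\<Sum>j<p. A j)" by (intro sum_mono) (rule LL(2))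
  finally show ?thesis using J d by (simp add: Good_def Fsd_def)
qed

lemma PP_nth: "length ks = length fs \<Longrightarrow> PP fs ks = (\<Prod>i<length fs. (fs ! i) (ks ! i))"
proof (induction fs arbitrary: ks)
  case Nil then show ?case by (simp add: PP_Nil)
next
  case (Cons f fs)
  then obtain k ks' where "ks = k # ks'" by (cases ks) auto
  then show ?case using Cons by (simp add: PP_Cons prod.lessThan_Suc_shift del: prod.lessThan_Suc)
qed

lemma factor_eq:
  assumes "1 \<le> k" and that: "z' j = z"
  shows "(of_nat k :: complex) ^ e * (z powi (- int k) / (pochhammer (of_nat k) (m + 1)) ^ a)
       = fac z' ({j}, LL e m a) k"
proof -
  have p: "pochhammer (of_nat k :: complex) (m + 1) = (\<Prod>i<Suc m. of_nat (k + i))"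
    by (simp add: pochhammer_prod atLeast0LessThan)
  have "1 / (pochhammer (of_nat k :: complex) (m + 1)) ^ a = inverse (\<Prod>i<Suc m. (of_nat (k + i) :: complex) ^ a)"
    unfolding p by (simp only: divide_inverse mult_1 prod_power_distrib)
  also have "\<dots> = (\<Prod>i<Suc m. inverse ((of_nat (k + i) :: complex) ^ a))"
    by (simp only: prod_inversef[symmetric] comp_def)
  also have "\<dots> = (\<Prod>i<Suc m. (of_nat (k + i) :: complex) powi (- int a))"
    by (simp only: power_int_minus power_int_of_nat)
  finally have q1: "1 / (pochhammer (of_nat k :: complex) (m + 1)) ^ a = (\<Prod>i<Suc m. (of_nat (k + i) :: complex) powi (- int a))" .
  have q2: "z powi (- int k) = (1 / z) ^ k" by (simp add: power_int_minus power_int_of_nat power_one_over inverse_eq_divide)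
  have W: "wJ z' {j} = 1 / z" using that by (simp add: wJ_def)
  have R: "fac z' ({j}, LL e m a) k = (1 / z) ^ k * ((of_nat k :: complex) ^ e * (\<Prod>i<Suc m. (of_nat (k + i) :: complex) powi (- int a)))"
    by (simp only: fac_def fst_conv snd_conv W LL(1)[OF assms(1)])
  show ?thesis unfolding R q1[symmetric] q2[symmetric] by (simp add: divide_inverse mult_ac)
qed

lemma infsum_sum_list:
  fixes f :: "'b \<Rightarrow> 'a \<Rightarrow> complex"
  assumes "\<And>x. x \<in> set xs \<Longrightarrow> f x summable_on A"
  shows "infsum (\<lambda>a. \<Sum>x\<leftarrow>xs. f x a) A = (\<Sum>x\<leftarrow>xs. infsum (f x) A)
        \<and> (\<lambda>a. \<Sum>x\<leftarrow>xs. f x a) summable_on A"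
  using assms
proof (induction xs)
  case Nil then show ?case by simp
next
  case (Cons y xs)
  then have IH: "infsum (\<lambda>a. \<Sum>x\<leftarrow>xs. f x a) A = (\<Sum>x\<leftarrow>xs. infsum (f x) A)"
    "(\<lambda>a. \<Sum>x\<leftarrow>xs. f x a) summable_on A" by auto
  have sy: "f y summable_on A" using Cons by simp
  show ?case using infsum_add[OF sy IH(2)] summable_on_add[OF sy IH(2)] IH(1) by simp
qed

lemma Sser_eq:
  assumes D: "Dom p z" and p1: "1 \<le> p"
  shows "Sser p A n P z = (\<Sum>(e, c)\<leftarrow>P. of_rat c * CS z (Fsd p A n e))"
proof -
  have pt: "poly_eval P ks * (\<Prod>j<p. (z j) powi (- int (ks ! j)) / (pochhammer (of_nat (ks ! j)) (n j + 1)) ^ (A j))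
      = (\<Sum>(e, c)\<leftarrow>P. of_rat c * PP (map (fac z) (Fsd p A n e)) ks)" if ks: "ks \<in> chains p" for ks
  proof -
    have l: "length ks = p" using chains_len[OF ks] .
    have k1: "\<And>j. j < p \<Longrightarrow> 1 \<le> ks ! j" using chains_nth_ge1[OF ks] .
    have PPe: "PP (map (fac z) (Fsd p A n e)) ks = (\<Prod>j<p. (of_nat (ks ! j) :: complex) ^ e j *
        ((z j) powi (- int (ks ! j)) / (pochhammer (of_nat (ks ! j)) (n j + 1)) ^ (A j)))" for e
    proof -
      have "PP (map (fac z) (Fsd p A n e)) ks = (\<Prod>j<p. fac z ({j}, LL (e j) (n j) (A j)) (ks ! j))"
        using l by (simp add: PP_nth Fsd_def)
      also have "\<dots> = (\<Prod>j<p. (of_nat (ks ! j) :: complex) ^ e j *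
        ((z j) powi (- int (ks ! j)) / (pochhammer (of_nat (ks ! j)) (n j + 1)) ^ (A j)))"
        by (rule prod.cong[OF refl]) (use factor_eq[OF _ refl] k1 in auto)
      finally show ?thesis .
    qed
    have "poly_eval P ks * (\<Prod>j<p. (z j) powi (- int (ks ! j)) / (pochhammer (of_nat (ks ! j)) (n j + 1)) ^ (A j))
       = (\<Sum>(e, c)\<leftarrow>P. of_rat c * (\<Prod>j<p. (of_nat (ks ! j) :: complex) ^ e j) *
           (\<Prod>j<p. (z j) powi (- int (ks ! j)) / (pochhammer (of_nat (ks ! j)) (n j + 1)) ^ (A j)))"
      unfolding poly_eval_def l by (induction P) (auto simp: algebra_simps)
    also have "\<dots> = (\<Sum>(e, c)\<leftarrow>P. of_rat c * PP (map (fac z) (Fsd p A n e)) ks)"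
      by (rule arg_cong[where f=sum_list], rule map_cong[OF refl]) (auto simp: PPe prod.distrib[symmetric] mult.assoc)
    finally show ?thesis .
  qed
  have len: "length (Fsd p A n e) = p" for e by (simp add: Fsd_def)
  have sm: "(\<lambda>ks. (\<lambda>(e, c). of_rat c * PP (map (fac z) (Fsd p A n e)) ks) x) summable_on chains p" for x
  proof -
    obtain e c where x: "x = (e, c)" by (cases x) auto
    have "Jok p (Fsd p A n e)" using Good_Fsd[OF p1] by (simp add: Good_def)
    then have "PP (map (fac z) (Fsd p A n e)) summable_on chains p" using summable_PP[OF D] len by metis
    then show ?thesis unfolding x by (simp add: summable_on_cmult_right)
  qed
  have "Sser p A n P z = infsum (\<lambda>ks. \<Sum>x\<leftarrow>P. (\<lambda>(e, c). of_rat c * PP (map (fac z) (Fsd p A n e)) ks) x) (chains p)"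
    unfolding Sser_def
  proof (rule infsum_cong)
    fix ks assume ks: "ks \<in> chains p"
    show "poly_eval P ks * (\<Prod>j<p. (z j) powi (- int (ks ! j)) / (pochhammer (of_nat (ks ! j)) (n j + 1)) ^ (A j))
      = (\<Sum>x\<leftarrow>P. (\<lambda>(e, c). of_rat c * PP (map (fac z) (Fsd p A n e)) ks) x)"
      unfolding pt[OF ks] by (simp add: split_def)
  qed
  also have "\<dots> = (\<Sum>x\<leftarrow>P. infsum (\<lambda>ks. (\<lambda>(e, c). of_rat c * PP (map (fac z) (Fsd p A n e)) ks) x) (chains p))"
    using infsum_sum_list[of P "\<lambda>x ks. (\<lambda>(e, c). of_rat c * PP (map (fac z) (Fsd p A n e)) ks) x" "chains p"] sm by blast
  also have "\<dots> = (\<Sum>(e, c)\<leftarrow>P. of_rat c * CS z (Fsd p A n e))"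
    by (rule arg_cong[where f=sum_list], rule map_cong[OF refl])
       (auto simp: CS_def CSf_def len infsum_cmult_right')
  finally show ?thesis .
qed

theorem mainTheorem1:
  fixes p :: nat and A n :: "nat \<Rightarrow> nat" and P :: "((nat \<Rightarrow> nat) \<times> rat) list"
  assumes "p \<ge> 1" and "\<forall>j<p. A j \<ge> 1"
  shows "\<exists>T :: (((nat \<Rightarrow> int) \<times> rat) list \<times> int list \<times> nat set list) list.
    (\<forall>(L, s, I)\<in>set T. length s \<le> p \<and> length I = length s \<and>
        (\<forall>i<length s. I ! i \<noteq> {} \<and> I ! i \<subseteq> {..<p}) \<and>
        (\<Sum>i<length s. max (s ! i) 0) \<le> int (\<Sum>j<p. A j)) \<and>
    (\<forall>z :: nat \<Rightarrow> complex. norm (z 0) > 1 \<and> (\<forall>j<p. norm (z j) \<ge> 1) \<longrightarrow>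
        Sser p A n P z =
        (\<Sum>(L, s, I)\<leftarrow>T. laurent_eval L p z * La s (map (\<lambda>J. 1 / (\<Prod>j\<in>J. z j)) I)))"
proof -
  have I: "inV p (\<Sum>j<p. A j) (\<lambda>z. \<Sum>(e, c)\<leftarrow>P. of_rat c * CS z (Fsd p A n e))"
  proof -
    have "inV p (\<Sum>j<p. A j) (\<lambda>z. \<Sum>x\<leftarrow>P. (\<lambda>(e, c). of_rat c * CS z (Fsd p A n e)) x)"
    proof (rule inV_sum_list)
      fix x assume "x \<in> set P"
      obtain e c where x: "x = (e, c)" by (cases x) auto
      show "inV p (\<Sum>j<p. A j) (\<lambda>z. (\<lambda>(e, c). of_rat c * CS z (Fsd p A n e)) x)"
        unfolding x using inV_scale[where c=c, OF main[OF Good_Fsd[OF assms(1)]]] by simp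
    qed
    then show ?thesis by (simp add: split_def)
  qed
  have I2: "inV p (\<Sum>j<p. A j) (\<lambda>z. Sser p A n P z)"
  proof (rule inV_cong[OF I])
    fix z assume "Dom p z"
    then show "(\<Sum>(e, c)\<leftarrow>P. of_rat c * CS z (Fsd p A n e)) = Sser p A n P z"
      using Sser_eq[OF _ assms(1)] by simp
  qed
  then show ?thesis unfolding inV_def okE_def evT_def Dom_def by auto
qed


end
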